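(* Let $A\in {\operatorname{\mathsf{TPD}}}_n(\mathbb{S}_{\max}^\vee)$, set $\gamma_i=a_{ii}$ ordered so that $\gamma_1\succeq\cdots\succeq\gamma_n$, let $\gamma=\gamma_k$ and $B=B_k=\gamma_k I\ominus A$. Assume that $\gamma$ is a simple $\mathbb{S}_{\max}$-eigenvalue. Let \[ v^{(k)}:= (B_k)_{:,k}^{\mathrm{adj}}. \] Then we have the following properties: \begin{enumerate} \item $v^{(k)}$ is a weak $\mathbb{S}_{\max}$-eigenvector associated to $\gamma$, such that $v^{(k)}_k\in\mathbb{S}_{\max}^\vee\setminus\{\mathbf{0}\}$. \item There exists a $\mathbb{S}_{\max}$-eigenvector $v$ associated to $\gamma$ such that $|v|=|v^{(k)}|$ and $v_i=v^{(k)}_i$ for all $i\in [n]$ satisfying $v^{(k)}_i\in\mathbb{S}_{\max}^\vee$, in particular for $i=k$. \item Any $\mathbb{S}_{\max}$-eigenvector $v$ associated to $\gamma$ satisfies $v\,\nabla\, \lambda v^{(k)}$ for some $\lambda\in \mathbb{S}_{\max}^{\vee}\setminus\{\mathbf{0}\}$. \end{enumerate}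
   Context: $\mathbb{S}_{\max}$ is the symmetrized tropical semiring over a divisible totally ordered abelian group, with zero $\mathbf{0}$, unit $\mathbf{1}$, minus $\ominus$, modulus $|\cdot|$; $\mathbb{S}_{\max}^\vee$ is the set of signed elements; $a\,\nabla\, b$ iff $a\ominus b$ is balanced; $a\preceq b$ iff $b=a\oplus b$. $A\in{\operatorname{\mathsf{TPD}}}_n(\mathbb{S}_{\max}^\vee)$: $A$ symmetric with signed entries, $\mathbf{0}<a_{ii}$ and $a_{ij}^2<a_{ii}a_{jj}$ for $i\ne j$ (where $a<b$ iff $b\ominus a$ is positive). Its $\mathbb{S}_{\max}$-eigenvalues are its diagonal entries; $\gamma_k$ simple means it occurs once on the diagonal. $(M^{\mathrm{adj}})_{ij}=(\ominus\mathbf{1})^{i+j}\det M[\hat j,\hat i]$ (signed determinant), $M_{:,k}$ the $k$-th column. An $\mathbb{S}_{\max}$-eigenvector for $\gamma$ is $v\in(\mathbb{S}_{\max}^\vee)^n\setminus\{\mathbf{0}\}$ with $Av\,\nabla\,\gamma v$; a weak $\mathbb{S}_{\max}$-eigenvector is $v\in\mathbb{S}_{\max}^n$ with at least one coordinate in $\mathbb{S}_{\max}^\vee\setminus\{\mathbf{0}\}$ and $Av\,\nabla\,\gamma v$. *)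

theory Defs
  imports "HOL-Combinatorics.Permutations"
begin

text \<open>The value group G is written additively (the tropical product is +).
  Elements of S_max: zero, or a modulus in G together with a sign:
  positive, negative (ominus) or balanced (bullet).\<close>

datatype sgn = SPos | SNeg | SBal

fun sgn_mult :: "sgn \<Rightarrow> sgn \<Rightarrow> sgn" where
  "sgn_mult SBal _ = SBal"
| "sgn_mult _ SBal = SBal"
| "sgn_mult SPos t = t"
| "sgn_mult SNeg SPos = SNeg"
| "sgn_mult SNeg SNeg = SPos"

fun sgn_neg :: "sgn \<Rightarrow> sgn" where
  "sgn_neg SPos = SNeg"
| "sgn_neg SNeg = SPos"
| "sgn_neg SBal = SBal"

datatype 'g smax = SZero | SElt sgn 'g

instantiation smax :: (linordered_ab_group_add) comm_monoid_add
begin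
definition zero_smax :: "'a smax" where "zero_smax = SZero"
fun plus_smax :: "'a smax \<Rightarrow> 'a smax \<Rightarrow> 'a smax" where
  "plus_smax SZero b = b"
| "plus_smax (SElt s x) SZero = SElt s x"
| "plus_smax (SElt s x) (SElt t y) =
     (if y < x then SElt s x else if x < y then SElt t y
      else if s = t then SElt s x else SElt SBal x)"
instance
proof
  fix a b c :: "'a smax"
  show "a + b + c = a + (b + c)"
    by (cases a; cases b; cases c) auto
  show "a + b = b + a"
    by (cases a; cases b) auto
  show "0 + a = a" by (simp add: zero_smax_def)
qed
end

lemma sgn_mult_assoc: "sgn_mult (sgn_mult s t) u = sgn_mult s (sgn_mult t u)"
  by (cases s; cases t; cases u) auto

lemma sgn_mult_comm: "sgn_mult s t = sgn_mult t s"
  by (cases s; cases t) auto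

instantiation smax :: (linordered_ab_group_add) comm_monoid_mult
begin
definition one_smax :: "'a smax" where "one_smax = SElt SPos 0"
fun times_smax :: "'a smax \<Rightarrow> 'a smax \<Rightarrow> 'a smax" where
  "times_smax SZero b = SZero"
| "times_smax (SElt s x) SZero = SZero"
| "times_smax (SElt s x) (SElt t y) = SElt (sgn_mult s t) (x + y)"
instance
proof
  fix a b c :: "'a smax"
  show "a * b * c = a * (b * c)"
    by (cases a; cases b; cases c) (auto simp: sgn_mult_assoc add.assoc)
  show "a * b = b * a"
    by (cases a; cases b) (auto simp: sgn_mult_comm add.commute)
  show "1 * a = a"
    apply (cases a) apply (auto simp: one_smax_def)
    subgoal for s by (cases s) auto
    done
qed
end

fun sminus :: "'g smax \<Rightarrow> 'g smax" ("\<ominus>") where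
  "sminus SZero = SZero"
| "sminus (SElt s x) = SElt (sgn_neg s) x"

text \<open>The modulus |a|, seen as an element of R_max \<subseteq> S_max (positive or zero).\<close>
fun smod :: "'g smax \<Rightarrow> 'g smax" where
  "smod SZero = SZero"
| "smod (SElt s x) = SElt SPos x"

definition balanced :: "'g smax \<Rightarrow> bool" where
  "balanced a \<longleftrightarrow> a = SZero \<or> (\<exists>x. a = SElt SBal x)"

text \<open>signed elements: S_max^vee (includes zero)\<close>
definition signed :: "'g smax \<Rightarrow> bool" where
  "signed a \<longleftrightarrow> a = SZero \<or> (\<exists>x. a = SElt SPos x) \<or> (\<exists>x. a = SElt SNeg x)"

definition spositive :: "'g smax \<Rightarrow> bool" where
  "spositive a \<longleftrightarrow> (\<exists>x. a = SElt SPos x)"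

definition nabla :: "'g::linordered_ab_group_add smax \<Rightarrow> 'g smax \<Rightarrow> bool" where
  "nabla a b \<longleftrightarrow> balanced (a + \<ominus> b)"

definition spreceq :: "'g::linordered_ab_group_add smax \<Rightarrow> 'g smax \<Rightarrow> bool" where
  "spreceq a b \<longleftrightarrow> b = a + b"

definition sless :: "'g::linordered_ab_group_add smax \<Rightarrow> 'g smax \<Rightarrow> bool" where
  "sless a b \<longleftrightarrow> spositive (b + \<ominus> a)"

definition divisible_group :: "'g::linordered_ab_group_add itself \<Rightarrow> bool" where
  "divisible_group _ \<longleftrightarrow> (\<forall>(x::'g) (m::nat). 0 < m \<longrightarrow> (\<exists>y. (\<Sum>i<m. y) = x))"

section \<open>Matrices and vectors of size n (indices 0..<n)\<close>

definition sdet :: "nat \<Rightarrow> (nat \<Rightarrow> nat \<Rightarrow> 'g::linordered_ab_group_add smax) \<Rightarrow> 'g smax" where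
  "sdet n M = (\<Sum>\<sigma>\<in>{p. p permutes {0..<n}}.
       (if evenperm \<sigma> then 1 else \<ominus> 1) * (\<Prod>i<n. M i (\<sigma> i)))"

definition skip :: "nat \<Rightarrow> nat \<Rightarrow> nat" where
  "skip j r = (if r < j then r else Suc r)"

definition minor :: "(nat \<Rightarrow> nat \<Rightarrow> 'a) \<Rightarrow> nat \<Rightarrow> nat \<Rightarrow> nat \<Rightarrow> nat \<Rightarrow> 'a" where
  "minor M i j = (\<lambda>r c. M (skip i r) (skip j c))"

definition sadj :: "nat \<Rightarrow> (nat \<Rightarrow> nat \<Rightarrow> 'g::linordered_ab_group_add smax) \<Rightarrow> nat \<Rightarrow> nat \<Rightarrow> 'g smax" where
  "sadj n M i j = (\<ominus> 1) ^ (i + j) * sdet (n - 1) (minor M j i)"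

definition TPD :: "nat \<Rightarrow> (nat \<Rightarrow> nat \<Rightarrow> 'g::linordered_ab_group_add smax) \<Rightarrow> bool" where
  "TPD n A \<longleftrightarrow>
     (\<forall>i<n. \<forall>j<n. A i j = A j i \<and> signed (A i j)) \<and>
     (\<forall>i<n. sless 0 (A i i)) \<and>
     (\<forall>i<n. \<forall>j<n. i \<noteq> j \<longrightarrow> sless (A i j * A i j) (A i i * A j j))"

definition shift_mat :: "'g::linordered_ab_group_add smax \<Rightarrow> (nat \<Rightarrow> nat \<Rightarrow> 'g smax) \<Rightarrow> nat \<Rightarrow> nat \<Rightarrow> 'g smax" where
  "shift_mat \<gamma> A = (\<lambda>i j. (if i = j then \<gamma> else 0) + \<ominus> (A i j))"

definition mat_vec :: "nat \<Rightarrow> (nat \<Rightarrow> nat \<Rightarrow> 'g::linordered_ab_group_add smax) \<Rightarrow> (nat \<Rightarrow> 'g smax) \<Rightarrow> nat \<Rightarrow> 'g smax" where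
  "mat_vec n A v = (\<lambda>i. \<Sum>j<n. A i j * v j)"

definition eigvec :: "nat \<Rightarrow> (nat \<Rightarrow> nat \<Rightarrow> 'g::linordered_ab_group_add smax) \<Rightarrow> 'g smax \<Rightarrow> (nat \<Rightarrow> 'g smax) \<Rightarrow> bool" where
  "eigvec n A \<gamma> v \<longleftrightarrow> (\<forall>i<n. signed (v i)) \<and> (\<exists>i<n. v i \<noteq> 0) \<and>
     (\<forall>i<n. nabla (mat_vec n A v i) (\<gamma> * v i))"

definition weak_eigvec :: "nat \<Rightarrow> (nat \<Rightarrow> nat \<Rightarrow> 'g::linordered_ab_group_add smax) \<Rightarrow> 'g smax \<Rightarrow> (nat \<Rightarrow> 'g smax) \<Rightarrow> bool" where
  "weak_eigvec n A \<gamma> v \<longleftrightarrow> (\<exists>i<n. signed (v i) \<and> v i \<noteq> 0) \<and>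
     (\<forall>i<n. nabla (mat_vec n A v i) (\<gamma> * v i))"

end

theory Submission
  imports Defs "HOL-Combinatorics.Orbits"
begin

lemma sgn_aux: "s \<noteq> t \<Longrightarrow> sgn_mult s u = sgn_mult t u \<Longrightarrow> sgn_mult t u = SBal"
  by (cases s; cases t; cases u) auto

instance smax :: (linordered_ab_group_add) comm_semiring_1
proof
  fix a b c :: "'a smax"
  show "(a + b) * c = a * c + b * c"
    by (cases a; cases b; cases c) (auto simp: zero_smax_def dest: sgn_aux)
  show "0 * a = 0" by (simp add: zero_smax_def)
  show "a * 0 = 0" by (cases a) (simp_all add: zero_smax_def)
  show "(0::'a smax) \<noteq> 1" by (simp add: zero_smax_def one_smax_def)
qed

fun vl :: "'g smax \<Rightarrow> 'g" where
  "vl SZero = undefined" | "vl (SElt s x) = x"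

definition mle :: "'g::linordered_ab_group_add smax \<Rightarrow> 'g smax \<Rightarrow> bool" where
  "mle a b \<longleftrightarrow> a = 0 \<or> (b \<noteq> 0 \<and> vl a \<le> vl b)"
definition mlt :: "'g::linordered_ab_group_add smax \<Rightarrow> 'g smax \<Rightarrow> bool" where
  "mlt a b \<longleftrightarrow> b \<noteq> 0 \<and> (a = 0 \<or> vl a < vl b)"

lemmas zo = zero_smax_def one_smax_def

lemma SElt_ne0[simp]: "SElt s x \<noteq> 0" "0 \<noteq> SElt s x" by (auto simp: zo)

lemma smult_eq0[simp]: "(a::'g::linordered_ab_group_add smax) * b = 0 \<longleftrightarrow> a = 0 \<or> b = 0"
  by (cases a; cases b) (auto simp: zo)

lemma sadd_eq0[simp]: "(a::'g::linordered_ab_group_add smax) + b = 0 \<longleftrightarrow> a = 0 \<and> b = 0"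
  by (cases a; cases b) (auto simp: zo)

lemma sminus_eq0[simp]: "\<ominus> (a::'g::linordered_ab_group_add smax) = 0 \<longleftrightarrow> a = 0"
  by (cases a) (auto simp: zo)

lemma sminus_0[simp]: "\<ominus> 0 = (0::'g::linordered_ab_group_add smax)" by (simp add: zo)

lemma vl_mult: "a \<noteq> 0 \<Longrightarrow> b \<noteq> 0 \<Longrightarrow> vl ((a::'g::linordered_ab_group_add smax) * b) = vl a + vl b"
  by (cases a; cases b) (auto simp: zo)

lemma vl_minus[simp]: "vl (\<ominus> a) = vl a"
  by (cases a) auto

lemma sgn_neg_neg[simp]: "sgn_neg (sgn_neg s) = s" by (cases s) auto

lemma sminus_sminus[simp]: "\<ominus> (\<ominus> a) = a" by (cases a) auto

lemma sgn_neg_inj[simp]: "sgn_neg s = sgn_neg t \<longleftrightarrow> s = t" by (cases s; cases t) auto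
lemma sgn_neg_bal[simp]: "sgn_neg s = SBal \<longleftrightarrow> s = SBal" by (cases s) auto

lemma sminus_add: "\<ominus> ((a::'g::linordered_ab_group_add smax) + b) = \<ominus> a + \<ominus> b"
  apply (cases a; cases b) apply (auto simp: zo)
  done

lemma sgn_mult_neg: "sgn_mult (sgn_neg s) t = sgn_neg (sgn_mult s t)"
  by (cases s; cases t) auto

lemma sminus_mult: "\<ominus> ((a::'g::linordered_ab_group_add smax) * b) = \<ominus> a * b"
  by (cases a; cases b) (auto simp: zo sgn_mult_neg)

lemma mult_sminus: "(a::'g::linordered_ab_group_add smax) * \<ominus> b = \<ominus> (a * b)"
  by (metis mult.commute sminus_mult)

lemma sminus_sum: "finite T \<Longrightarrow> \<ominus> (sum f T) = (\<Sum>x\<in>T. \<ominus> (f x :: 'g::linordered_ab_group_add smax))"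
  by (induction T rule: finite_induct) (auto simp: sminus_add)

lemma sadd_idem[simp]: "(a::'g::linordered_ab_group_add smax) + a = a"
  by (cases a) auto

lemma mle_0[simp]: "mle 0 a" by (simp add: mle_def)
lemma mle_0_iff[simp]: "mle a 0 \<longleftrightarrow> a = 0" by (auto simp: mle_def)
lemma mlt_0[simp]: "\<not> mlt a 0" by (simp add: mlt_def)
lemma mlt_0_iff[simp]: "mlt 0 a \<longleftrightarrow> a \<noteq> 0" by (simp add: mlt_def)

lemma mle_refl[simp]: "mle a a" by (simp add: mle_def)
lemma not_mle: "\<not> mle a b \<longleftrightarrow> mlt b a" by (auto simp: mle_def mlt_def)
lemma not_mlt: "\<not> mlt a b \<longleftrightarrow> mle b a" by (auto simp: mle_def mlt_def)
lemma mlt_imp_mle: "mlt a b \<Longrightarrow> mle a b" by (auto simp: mle_def mlt_def)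
lemma mlt_imp_ne0: "mlt a b \<Longrightarrow> b \<noteq> 0" by (auto simp: mlt_def)
lemma mle_trans: "mle a b \<Longrightarrow> mle b c \<Longrightarrow> mle a c" by (auto simp: mle_def)
lemma mlt_mle_trans: "mlt a b \<Longrightarrow> mle b c \<Longrightarrow> mlt a c" by (auto simp: mle_def mlt_def)
lemma mle_mlt_trans: "mle a b \<Longrightarrow> mlt b c \<Longrightarrow> mlt a c" by (auto simp: mle_def mlt_def)
lemma mlt_irrefl[simp]: "\<not> mlt a a" by (auto simp: mlt_def)
lemma mle_total: "mle a b \<or> mle b a" by (auto simp: mle_def)

lemma mle_minus_l[simp]: "mle (\<ominus> a) b \<longleftrightarrow> mle a b" by (auto simp: mle_def)
lemma mle_minus_r[simp]: "mle a (\<ominus> b) \<longleftrightarrow> mle a b" by (auto simp: mle_def)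
lemma mlt_minus_l[simp]: "mlt (\<ominus> a) b \<longleftrightarrow> mlt a b" by (auto simp: mlt_def)
lemma mlt_minus_r[simp]: "mlt a (\<ominus> b) \<longleftrightarrow> mlt a b" by (auto simp: mlt_def)

lemma mle_mult: "mle a b \<Longrightarrow> mle c d \<Longrightarrow> mle (a * c) (b * (d::'g::linordered_ab_group_add smax))"
  by (auto simp: mle_def vl_mult add_mono)

lemma mlt_mult: "mlt a b \<Longrightarrow> mle c d \<Longrightarrow> d \<noteq> 0 \<Longrightarrow> mlt (a * c) (b * (d::'g::linordered_ab_group_add smax))"
  by (cases "a = 0 \<or> c = 0") (auto simp: mle_def mlt_def vl_mult add_less_le_mono)

lemma mle_mult_cancel: "mle (a * c) (b * c) \<Longrightarrow> c \<noteq> 0 \<Longrightarrow> mle a (b::'g::linordered_ab_group_add smax)"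
  by (auto simp: mle_def vl_mult)

lemma mlt_mult_cancel: "mlt (a * c) (b * c) \<Longrightarrow> mlt a (b::'g::linordered_ab_group_add smax)"
  by (cases "a = 0 \<or> c = 0") (auto simp: mlt_def vl_mult)

lemma dbl_le: "(x::'a::linordered_ab_group_add) + x \<le> y + y \<Longrightarrow> x \<le> y"
proof (rule ccontr)
  assume "x + x \<le> y + y" "\<not> x \<le> y"
  then have "y + y < x + x" by (simp add: add_strict_mono)
  then show False using \<open>x + x \<le> y + y\<close> by simp
qed

lemma dbl_less: "(x::'a::linordered_ab_group_add) + x < y + y \<Longrightarrow> x < y"
proof (rule ccontr)
  assume "x + x < y + y" "\<not> x < y"
  then have "y + y \<le> x + x" by (simp add: add_mono)
  then show False using \<open>x + x < y + y\<close> by simp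
qed

lemma mle_sq: "mle (a * a) (b * b) \<Longrightarrow> mle a (b::'g::linordered_ab_group_add smax)"
  by (cases "a = 0") (auto simp: mle_def vl_mult intro: dbl_le)

lemma mlt_sq: "mlt (a * a) (b * b) \<Longrightarrow> mlt a (b::'g::linordered_ab_group_add smax)"
  by (cases "a = 0") (auto simp: mlt_def vl_mult intro: dbl_less)

lemma vl_add: "a \<noteq> 0 \<Longrightarrow> b \<noteq> 0 \<Longrightarrow> vl ((a::'g::linordered_ab_group_add smax) + b) = max (vl a) (vl b)"
  by (cases a; cases b) (auto simp: zo max_def)

lemma add_0_left': "(a::'g::linordered_ab_group_add smax) = 0 \<Longrightarrow> a + b = b" by simp
lemma add_0_right': "(b::'g::linordered_ab_group_add smax) = 0 \<Longrightarrow> a + b = a" by simp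

lemma mle_add_iff: "mle ((a::'g::linordered_ab_group_add smax) + b) c \<longleftrightarrow> mle a c \<and> mle b c"
  by (cases "a = 0"; cases "b = 0") (auto simp: mle_def vl_add)

lemma mlt_add_iff: "mlt ((a::'g::linordered_ab_group_add smax) + b) c \<longleftrightarrow> mlt a c \<and> mlt b c"
  by (cases "a = 0"; cases "b = 0") (auto simp: mlt_def vl_add)

lemma mle_add1: "mle a ((a::'g::linordered_ab_group_add smax) + b)"
  by (cases "a = 0"; cases "b = 0") (auto simp: mle_def vl_add)
lemma mle_add2: "mle b ((a::'g::linordered_ab_group_add smax) + b)"
  by (cases "a = 0"; cases "b = 0") (auto simp: mle_def vl_add)

lemma mlt_absorb: "mlt a b \<Longrightarrow> (a::'g::linordered_ab_group_add smax) + b = b"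
  by (cases a; cases b) (auto simp: mlt_def zo)
lemma mlt_absorb2: "mlt a b \<Longrightarrow> b + (a::'g::linordered_ab_group_add smax) = b"
  using mlt_absorb by (metis add.commute)

lemma mle_sum_iff: "finite T \<Longrightarrow> mle (sum f T) (c::'g::linordered_ab_group_add smax) \<longleftrightarrow> (\<forall>x\<in>T. mle (f x) c)"
  by (induction T rule: finite_induct) (auto simp: mle_add_iff)

lemma mlt_sum: "finite T \<Longrightarrow> c \<noteq> 0 \<Longrightarrow> (\<forall>x\<in>T. mlt (f x) c) \<Longrightarrow> mlt (sum f T) (c::'g::linordered_ab_group_add smax)"
  by (induction T rule: finite_induct) (auto simp: mlt_add_iff)

lemma mlt_sum_iff: "finite T \<Longrightarrow> mlt (sum f T) (c::'g::linordered_ab_group_add smax) \<longleftrightarrow> c \<noteq> 0 \<and> (\<forall>x\<in>T. mlt (f x) c)"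
  by (induction T rule: finite_induct) (auto simp: mlt_add_iff)

lemma mle_sum_term: "finite T \<Longrightarrow> x \<in> T \<Longrightarrow> mle (f x) (sum f T :: 'g::linordered_ab_group_add smax)"
  by (metis mle_refl mle_sum_iff not_mle mle_mlt_trans mlt_irrefl)

lemma prod_eq0_iff: "finite T \<Longrightarrow> prod f T = (0::'g::linordered_ab_group_add smax) \<longleftrightarrow> (\<exists>x\<in>T. f x = 0)"
  by (induction T rule: finite_induct) auto

lemma mle_prod: "(\<forall>x\<in>T. mle (f x) (g x)) \<Longrightarrow> mle (prod f T) (prod g T :: 'g::linordered_ab_group_add smax)"
  by (induction T rule: infinite_finite_induct) (auto simp: mle_mult)

lemma mlt_prod: "finite T \<Longrightarrow> (\<forall>x\<in>T. mle (f x) (g x)) \<Longrightarrow> x0 \<in> T \<Longrightarrow> mlt (f x0) (g x0) \<Longrightarrow>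
   (\<forall>x\<in>T. g x \<noteq> 0) \<Longrightarrow> mlt (prod f T) (prod g T :: 'g::linordered_ab_group_add smax)"
proof -
  assume fin: "finite T" and le: "\<forall>x\<in>T. mle (f x) (g x)" and x0: "x0 \<in> T" and lt: "mlt (f x0) (g x0)"
    and nz: "\<forall>x\<in>T. g x \<noteq> 0"
  have "prod f T = f x0 * prod f (T - {x0})" "prod g T = g x0 * prod g (T - {x0})"
    using fin x0 by (auto simp: prod.remove)
  moreover have "mle (prod f (T - {x0})) (prod g (T - {x0}))" using le by (auto intro: mle_prod)
  moreover have "prod g (T - {x0}) \<noteq> 0" using nz fin by (auto simp: prod_eq0_iff)
  ultimately show ?thesis using lt by (simp add: mlt_mult)
qed

lemma balanced_0[simp]: "balanced (0::'g::linordered_ab_group_add smax)" by (simp add: balanced_def zo)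
lemma signed_0[simp]: "signed (0::'g::linordered_ab_group_add smax)" by (simp add: signed_def zo)

lemma balanced_add: "balanced a \<Longrightarrow> balanced b \<Longrightarrow> balanced ((a::'g::linordered_ab_group_add smax) + b)"
  by (cases a; cases b) (auto simp: balanced_def zo)

lemma balanced_mult: "balanced a \<Longrightarrow> balanced ((a::'g::linordered_ab_group_add smax) * b)"
  by (cases a; cases b) (auto simp: balanced_def zo)

lemma balanced_minus[simp]: "balanced (\<ominus> a) \<longleftrightarrow> balanced (a::'g::linordered_ab_group_add smax)"
  apply (cases a) apply (simp add: balanced_def zo)
  subgoal for s x by (cases s) (auto simp: balanced_def zo)
  done

lemma signed_minus[simp]: "signed (\<ominus> a) \<longleftrightarrow> signed (a::'g::linordered_ab_group_add smax)"
  apply (cases a) apply (simp add: signed_def zo)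
  subgoal for s x by (cases s) (auto simp: signed_def zo)
  done

lemma balanced_self: "balanced ((a::'g::linordered_ab_group_add smax) + \<ominus> a)"
  apply (cases a) apply (simp add: balanced_def zo)
  subgoal for s x by (cases s) (auto simp: balanced_def zo)
  done

lemma balanced_dom: "balanced a \<Longrightarrow> mle b a \<Longrightarrow> balanced ((a::'g::linordered_ab_group_add smax) + b)"
  by (cases a; cases b) (auto simp: balanced_def mle_def zo)

lemma signed_mult: "signed a \<Longrightarrow> signed b \<Longrightarrow> signed ((a::'g::linordered_ab_group_add smax) * b)"
  apply (cases a; cases b) apply (auto simp: signed_def zo) done

lemma signed_mult_D: "signed ((a::'g::linordered_ab_group_add smax) * b) \<Longrightarrow> a * b \<noteq> 0 \<Longrightarrow> signed a \<and> signed b"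
  apply (cases a; cases b) apply (simp_all add: signed_def zo)
  subgoal for s x t y by (cases s; cases t) auto
  done

lemma signed_balanced: "signed (a::'g::linordered_ab_group_add smax) \<Longrightarrow> balanced a \<Longrightarrow> a = 0"
  by (auto simp: signed_def balanced_def zo)

lemma signed_or_balanced: "signed a \<or> balanced a"
  apply (cases a) apply (simp add: signed_def balanced_def zo)
  subgoal for s x by (cases s) (auto simp: signed_def balanced_def zo)
  done

lemma signed_eq: "signed a \<Longrightarrow> signed b \<Longrightarrow> balanced ((a::'g::linordered_ab_group_add smax) + \<ominus> b) \<Longrightarrow> a = b"
  apply (cases a; cases b) apply (auto simp: signed_def balanced_def zo split: if_splits) done

fun sinv :: "'g::linordered_ab_group_add smax \<Rightarrow> 'g smax" where
  "sinv SZero = SZero" | "sinv (SElt s x) = SElt s (- x)"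

lemma sinv_right: "signed (a::'g::linordered_ab_group_add smax) \<Longrightarrow> a \<noteq> 0 \<Longrightarrow> a * sinv a = 1"
  by (cases a) (auto simp: signed_def zo)

lemma sinv_signed: "signed a \<Longrightarrow> signed (sinv a)"
  by (cases a) (auto simp: signed_def zo)

lemma sinv_ne0: "(a::'g::linordered_ab_group_add smax) \<noteq> 0 \<Longrightarrow> sinv a \<noteq> 0"
  by (cases a) (auto simp: zo)

lemma two_sum_signed: "a + b = x \<Longrightarrow> signed x \<Longrightarrow> x \<noteq> 0 \<Longrightarrow>
   (a = x \<or> mlt a x) \<and> (b = x \<or> mlt b (x::'g::linordered_ab_group_add smax))"
  by (cases a; cases b; cases x) (auto simp: signed_def mlt_def zo split: if_splits)

lemma sum_signed_terms: "finite T \<Longrightarrow> sum g T = x \<Longrightarrow> signed x \<Longrightarrow> x \<noteq> 0 \<Longrightarrow>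
   \<forall>t\<in>T. g t = x \<or> mlt (g t) (x::'g::linordered_ab_group_add smax)"
proof (induction T arbitrary: x rule: finite_induct)
  case empty then show ?case by simp
next
  case (insert t T)
  then have eq: "g t + sum g T = x" by simp
  from two_sum_signed[OF eq insert.prems(2,3)]
  have A: "g t = x \<or> mlt (g t) x" and B: "sum g T = x \<or> mlt (sum g T) x" by auto
  from B have "\<forall>t\<in>T. g t = x \<or> mlt (g t) x"
  proof
    assume "sum g T = x" then show ?thesis using insert by auto
  next
    assume "mlt (sum g T) x" then show ?thesis using insert(1) by (auto simp: mlt_sum_iff)
  qed
  with A show ?case by auto
qed

lemma sum_absorb: "finite T \<Longrightarrow> (\<forall>t\<in>T. f t = c \<or> f t = 0 \<or> mlt (f t) c) \<Longrightarrow>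
   c + sum f T = (c::'g::linordered_ab_group_add smax)"
proof (induction T rule: finite_induct)
  case empty then show ?case by simp
next
  case (insert t T)
  then have IH: "c + sum f T = c" by auto
  have "c + sum f (insert t T) = (c + f t) + sum f T" using insert by (simp add: add.assoc)
  also have "c + f t = c" using insert.prems by (auto simp: mlt_absorb2)
  finally show ?case using IH by simp
qed

lemma sum_all_x: "finite T \<Longrightarrow> (\<forall>t\<in>T. f t = c \<or> f t = 0 \<or> mlt (f t) c) \<Longrightarrow> t0 \<in> T \<Longrightarrow> f t0 = c \<Longrightarrow>
   sum f T = (c::'g::linordered_ab_group_add smax)"
proof -
  assume a: "finite T" "\<forall>t\<in>T. f t = c \<or> f t = 0 \<or> mlt (f t) c" "t0 \<in> T" "f t0 = c"
  then have "sum f T = c + sum f (T - {t0})" by (simp add: sum.remove)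
  also have "\<dots> = c" using a by (intro sum_absorb) auto
  finally show ?thesis .
qed

lemma smod_eq_iff: "smod a = smod b \<longleftrightarrow> mle a b \<and> mle b a"
  by (cases a; cases b) (auto simp: mle_def zo)

lemma sum_smod_cong: "finite T \<Longrightarrow> (\<forall>t\<in>T. smod (f t) = smod (g t)) \<Longrightarrow>
   smod (sum f T) = smod (sum g T :: 'g::linordered_ab_group_add smax)"
  by (auto simp: smod_eq_iff mle_sum_iff intro: mle_trans mle_sum_term)

definition sg :: "(nat \<Rightarrow> nat) \<Rightarrow> 'g::linordered_ab_group_add smax" where
  "sg p = (if evenperm p then 1 else \<ominus> 1)"

lemma m1_mult_m1: "(\<ominus> 1) * (\<ominus> 1) = (1::'g::linordered_ab_group_add smax)"
  by (simp add: zo)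

lemma m1_pow: "(\<ominus> 1) ^ a = (if even a then 1 else (\<ominus> 1::'g::linordered_ab_group_add smax))"
  by (induction a) (auto simp: m1_mult_m1)

lemma sg_comp: "permutation p \<Longrightarrow> permutation q \<Longrightarrow> sg (p \<circ> q) = sg p * (sg q :: 'g::linordered_ab_group_add smax)"
  by (auto simp: sg_def evenperm_comp m1_mult_m1)

lemma sg_inv: "permutation p \<Longrightarrow> sg (inv p) = sg p"
  by (simp add: sg_def evenperm_inv)

lemma sg_swap_comp: "permutation p \<Longrightarrow> a \<noteq> b \<Longrightarrow> sg (p \<circ> transpose a b) = \<ominus> (sg p :: 'g::linordered_ab_group_add smax)"
  by (auto simp: sg_def evenperm_comp evenperm_swap permutation_swap_id zo)

lemma sg_cases: "sg p * x = x \<or> sg p * x = \<ominus> (x::'g::linordered_ab_group_add smax)"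
proof -
  have "sg p = 1 \<or> sg p = (\<ominus> 1 :: 'g smax)" by (simp add: sg_def)
  then show ?thesis by (metis mult_1 sminus_mult)
qed

lemma mle_sg_l[simp]: "mle (sg p * x) y \<longleftrightarrow> mle x (y::'g::linordered_ab_group_add smax)"
  using sg_cases[of p x] by (metis mle_minus_l)
lemma mlt_sg_l[simp]: "mlt (sg p * x) y \<longleftrightarrow> mlt x (y::'g::linordered_ab_group_add smax)"
  using sg_cases[of p x] by (metis mlt_minus_l)
lemma mle_sg_r[simp]: "mle y (sg p * x) \<longleftrightarrow> mle y (x::'g::linordered_ab_group_add smax)"
  using sg_cases[of p x] by (metis mle_minus_r)
lemma mlt_sg_r[simp]: "mlt y (sg p * x) \<longleftrightarrow> mlt y (x::'g::linordered_ab_group_add smax)"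
  using sg_cases[of p x] by (metis mlt_minus_r)
lemma sg_eq0[simp]: "sg p * x = 0 \<longleftrightarrow> x = (0::'g::linordered_ab_group_add smax)"
  using sg_cases[of p x] by (metis sminus_eq0)

definition cyc :: "nat \<Rightarrow> nat \<Rightarrow> nat \<Rightarrow> nat" where
  "cyc m p r = (if r < p then r else if r < m then Suc r else if r = m then p else r)"

lemma cyc_step: "p < m \<Longrightarrow> cyc m p = transpose p (Suc p) \<circ> cyc m (Suc p)"
  by (auto simp: fun_eq_iff cyc_def transpose_def)

lemma cyc_top: "cyc m m = id"
  by (auto simp: fun_eq_iff cyc_def)

lemma cyc_props: "m - p = d \<Longrightarrow> p \<le> m \<Longrightarrow> cyc m p permutes {0..<Suc m} \<and> evenperm (cyc m p) = even d"
proof (induction d arbitrary: p)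
  case 0 then have "p = m" by simp
  then have c: "cyc m p = id" by (simp add: cyc_top)
  show ?case unfolding c by (rule conjI[OF permutes_id]) simp
next
  case (Suc d)
  then have pm: "p < m" and d: "m - Suc p = d" by auto
  from Suc.IH[OF d] pm have IH: "cyc m (Suc p) permutes {0..<Suc m}" "evenperm (cyc m (Suc p)) = even d" by auto
  have sw: "transpose p (Suc p) permutes {0..<Suc m}" using pm by (intro permutes_swap_id) auto
  have "cyc m p permutes {0..<Suc m}" unfolding cyc_step[OF pm] by (rule permutes_compose[OF IH(1) sw])
  moreover have "evenperm (cyc m p) = even (Suc d)"
    unfolding cyc_step[OF pm]
    using IH(2) permutation_swap_id IH(1)
    by (subst evenperm_comp) (auto simp: evenperm_swap permutation_permutes)
  ultimately show ?case by simp
qed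

lemma cyc_permutes: "p \<le> m \<Longrightarrow> cyc m p permutes {0..<Suc m}"
  using cyc_props by blast

lemma cyc_permutation: "p \<le> m \<Longrightarrow> permutation (cyc m p)"
  using cyc_permutes by (auto simp: permutation_permutes)

lemma sg_cyc: assumes "p \<le> m" shows "sg (cyc m p) = (\<ominus> 1) ^ (m - p)"
proof -
  have "evenperm (cyc m p) = even (m - p)" using cyc_props[OF refl assms] by blast
  then show ?thesis by (simp add: sg_def m1_pow)
qed

lemma cyc_skip: "r < m \<Longrightarrow> p \<le> m \<Longrightarrow> cyc m p r = skip p r"
  by (auto simp: cyc_def skip_def)

lemma cyc_m: "p \<le> m \<Longrightarrow> cyc m p m = p"
  by (auto simp: cyc_def)

lemma inv_cyc_p: "p \<le> m \<Longrightarrow> inv (cyc m p) p = m"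
  using cyc_permutes[of p m] by (simp add: permutes_inv_eq cyc_m)

lemma cyc_image: "p \<le> m \<Longrightarrow> cyc m p ` {0..<m} = {0..<Suc m} - {p}"
proof -
  assume pm: "p \<le> m"
  have "cyc m p ` ({0..<Suc m} - {m}) = cyc m p ` {0..<Suc m} - {cyc m p m}"
    using image_set_diff[OF permutes_inj[OF cyc_permutes[OF pm]]] by simp
  also have "cyc m p ` {0..<Suc m} = {0..<Suc m}" using cyc_permutes[OF pm] by (rule permutes_image)
  finally show ?thesis using pm by (simp add: cyc_m atLeastLessThanSuc)
qed

lemma cyc_inj: "p \<le> m \<Longrightarrow> inj_on (cyc m p) A"
  using cyc_permutes permutes_inj_on by blast

lemma m1_pow_parity: "even (a + b) = even (c + d) \<Longrightarrow>
   (\<ominus> 1) ^ a * (\<ominus> 1) ^ b = ((\<ominus> 1) ^ (c + d) :: 'g::linordered_ab_group_add smax)"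
  by (auto simp: m1_pow m1_mult_m1)

lemma sadj_formula:
  fixes M :: "nat \<Rightarrow> nat \<Rightarrow> 'g::linordered_ab_group_add smax"
  assumes i: "i < n" and j: "j < n"
  shows "sadj n M i j = (\<Sum>p\<in>{p. p permutes {0..<n} \<and> p j = i}. sg p * (\<Prod>r\<in>{0..<n} - {j}. M r (p r)))"
proof -
  obtain m where n: "n = Suc m" using i by (cases n) auto
  have im: "i \<le> m" and jm: "j \<le> m" using i j n by auto
  define ci where "ci = cyc m i"
  define cj where "cj = cyc m j"
  have ci: "ci permutes {0..<Suc m}" "permutation ci" using cyc_permutes[OF im] cyc_permutation[OF im] by (auto simp: ci_def)
  have cj: "cj permutes {0..<Suc m}" "permutation cj" using cyc_permutes[OF jm] cyc_permutation[OF jm] by (auto simp: cj_def)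
  define Phi where "Phi = (\<lambda>s. ci \<circ> s \<circ> inv cj)"
  define Psi where "Psi = (\<lambda>t. inv ci \<circ> t \<circ> cj)"
  have "sadj n M i j = (\<ominus> 1) ^ (i + j) * sdet m (minor M j i)"
    by (simp add: sadj_def n)
  also have "sdet m (minor M j i) = (\<Sum>s\<in>{p. p permutes {0..<m}}. sg s * (\<Prod>r\<in>{0..<m}. M (skip j r) (skip i (s r))))"
    by (simp add: sdet_def minor_def sg_def atLeast0LessThan)
  also have "(\<ominus> 1) ^ (i + j) * \<dots> = (\<Sum>s\<in>{p. p permutes {0..<m}}. (\<ominus> 1) ^ (i + j) * (sg s * (\<Prod>r\<in>{0..<m}. M (skip j r) (skip i (s r)))))"
    by (simp add: sum_distrib_left)
  also have "\<dots> = (\<Sum>p\<in>{p. p permutes {0..<n} \<and> p j = i}. sg p * (\<Prod>r\<in>{0..<n} - {j}. M r (p r)))"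
  proof (rule sum.reindex_bij_witness[where i=Psi and j=Phi])
    fix s assume s: "s \<in> {p. p permutes {0..<m}}"
    then have sp: "s permutes {0..<m}" by simp
    show "Psi (Phi s) = s"
      by (simp add: Psi_def Phi_def fun_eq_iff permutes_inverses[OF ci(1)] permutes_inverses[OF cj(1)])
    have sp': "s permutes {0..<Suc m}" using sp by (rule permutes_subset) auto
    have sm: "s m = m" using sp by (rule permutes_not_in) simp
    show "Phi s \<in> {p. p permutes {0..<n} \<and> p j = i}"
      unfolding Phi_def n using permutes_compose[OF permutes_compose[OF permutes_inv[OF cj(1)] sp'] ci(1)]
      by (simp add: o_assoc cj_def ci_def inv_cyc_p[OF jm] sm cyc_m im)
    have sperm: "permutation s" using sp by (auto simp: permutation_permutes)
    have sgPhi: "sg (Phi s) = (sg ci * sg s) * sg cj"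
      unfolding Phi_def
      by (simp add: sg_comp sg_inv ci(2) cj(2) sperm permutation_compose permutation_inverse)
    have prod: "(\<Prod>r\<in>{0..<n} - {j}. M r (Phi s r)) = (\<Prod>r\<in>{0..<m}. M (skip j r) (skip i (s r)))"
    proof -
      have "(\<Prod>r\<in>{0..<n} - {j}. M r (Phi s r)) = (\<Prod>r\<in>cj ` {0..<m}. M r (Phi s r))"
        using cyc_image[OF jm] by (simp add: cj_def n)
      also have "\<dots> = (\<Prod>r\<in>{0..<m}. M (cj r) (Phi s (cj r)))"
        by (rule prod.reindex[unfolded comp_def]) (simp add: cj_def cyc_inj[OF jm])
      also have "\<dots> = (\<Prod>r\<in>{0..<m}. M (skip j r) (skip i (s r)))"
      proof (rule prod.cong[OF refl])
        fix r assume r: "r \<in> {0..<m}"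
        have "s r < m" using permutes_in_image[OF sp] r by auto
        have e1: "Phi s (cj r) = ci (s r)" by (simp add: Phi_def permutes_inverses[OF cj(1)])
        show "M (cj r) (Phi s (cj r)) = M (skip j r) (skip i (s r))"
          unfolding e1 using r \<open>s r < m\<close> by (simp add: cj_def ci_def cyc_skip im jm)
      qed
      finally show ?thesis .
    qed
    have "sg (Phi s) = (\<ominus> 1) ^ (i + j) * (sg s :: 'g smax)"
    proof -
      have P: "(\<ominus> 1) ^ (m - i) * (\<ominus> 1) ^ (m - j) = ((\<ominus> 1) ^ (i + j) :: 'g smax)"
        by (rule m1_pow_parity) (use im jm in presburger)
      show ?thesis unfolding sgPhi ci_def cj_def sg_cyc[OF im] sg_cyc[OF jm] P[symmetric]
        by (simp add: ac_simps)
    qed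
    then show "sg (Phi s) * (\<Prod>r\<in>{0..<n} - {j}. M r (Phi s r)) =
          (\<ominus> 1) ^ (i + j) * (sg s * (\<Prod>r\<in>{0..<m}. M (skip j r) (skip i (s r))))"
      by (simp add: prod mult.assoc)
  next
    fix t assume t: "t \<in> {p. p permutes {0..<n} \<and> p j = i}"
    then have tp: "t permutes {0..<Suc m}" and tj: "t j = i" by (auto simp: n)
    show "Phi (Psi t) = t"
      by (simp add: Psi_def Phi_def fun_eq_iff permutes_inverses[OF ci(1)] permutes_inverses[OF cj(1)])
    have pp: "Psi t permutes {0..<Suc m}" unfolding Psi_def
      using permutes_compose[OF cj(1) permutes_compose[OF tp permutes_inv[OF ci(1)]]] by (simp add: o_assoc)
    have "Psi t m = m" by (simp add: Psi_def cj_def cyc_m jm tj ci_def inv_cyc_p[OF im])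
    then have "Psi t permutes {0..<m}"
      using pp by (intro permutes_superset[OF pp]) (auto simp: atLeastLessThanSuc)
    then show "Psi t \<in> {p. p permutes {0..<m}}" by simp
  qed
  finally show ?thesis .
qed

lemma split_orbit:
  assumes tp: "t permutes S" and fin: "finite S" and ik: "i \<noteq> k" and kor: "k \<in> orbit t i"
  shows "k \<notin> orbit (t \<circ> transpose i k) i"
proof
  assume kin: "k \<in> orbit (t \<circ> transpose i k) i"
  define nu where "nu = t \<circ> transpose i k"
  have perm: "permutation t" using tp fin by (auto simp: permutation_permutes)
  have iorb: "i \<in> orbit t k"
    using orbit_swap[OF permutation_self_in_orbit[OF perm] kor] .
  define e where "e = funpow_dist1 t k i"
  have epos: "0 < e" by (simp add: e_def)
  have he: "(t ^^ e) k = i" unfolding e_def by (rule funpow_dist1_prop[OF iorb])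
  have nei: "(t ^^ m) k \<noteq> i" if "0 < m" "m < e" for m
    using funpow_dist1_least[OF that(1)] that(2) by (simp add: e_def)
  have nek: "(t ^^ m) k \<noteq> k" if m: "0 < m" "m < e" for m
  proof
    assume mk: "(t ^^ m) k = k"
    have "(t ^^ (e mod m)) k = (t ^^ e) k" by (rule funpow_mod_eq[OF mk])
    then have eq: "(t ^^ (e mod m)) k = i" using he by simp
    have "e mod m < m" using m by simp
    show False
    proof (cases "e mod m = 0")
      case True then show False using eq ik by simp
    next
      case False then show False using nei[of "e mod m"] eq \<open>e mod m < m\<close> m by simp
    qed
  qed
  have claim: "0 < m \<Longrightarrow> m \<le> e \<Longrightarrow> (nu ^^ m) i = (t ^^ m) k" for m
  proof (induction m)
    case 0 then show ?case by simp
  next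
    case (Suc m)
    show ?case
    proof (cases "m = 0")
      case True then show ?thesis by (simp add: nu_def)
    next
      case False
      then have IH: "(nu ^^ m) i = (t ^^ m) k" using Suc by simp
      have "(t ^^ m) k \<noteq> i" "(t ^^ m) k \<noteq> k" using nei[of m] nek[of m] False Suc.prems by auto
      then have ne: "(t ^^ m) k \<noteq> i" "(t ^^ m) k \<noteq> k" .
      have "(nu ^^ Suc m) i = nu ((nu ^^ m) i)" by simp
      also have "\<dots> = nu ((t ^^ m) k)" using IH by simp
      also have "\<dots> = t ((t ^^ m) k)" using ne by (simp add: nu_def transpose_def)
      finally show ?thesis by simp
    qed
  qed
  have "(nu ^^ e) i = i" using claim[OF epos] he by simp
  then have orb: "orbit nu i = {(nu ^^ m) i | m. m < e}" by (rule orbit_altdef_bounded[OF _ epos])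
  from kin obtain m where m: "m < e" "k = (nu ^^ m) i" unfolding nu_def[symmetric] orb by blast
  show False
  proof (cases "m = 0")
    case True then show False using m ik by simp
  next
    case False then show False using m claim[of m] nek[of m] by simp
  qed
qed

locale bm =
  fixes n k :: nat and B :: "nat \<Rightarrow> nat \<Rightarrow> 'g::linordered_ab_group_add smax"
  assumes kn: "k < n"
    and Bkk_bal: "balanced (B k k)"
    and Brr: "\<And>r. r < n \<Longrightarrow> r \<noteq> k \<Longrightarrow> signed (B r r)"
    and Brr_nz: "\<And>r. r < n \<Longrightarrow> B r r \<noteq> 0"
    and Bdom: "\<And>r c. r < n \<Longrightarrow> c < n \<Longrightarrow> r \<noteq> c \<Longrightarrow> mlt (B r c * B r c) (B r r * B c c)"
begin

definition pk :: "(nat \<Rightarrow> nat) \<Rightarrow> 'g smax" where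
  "pk p = (\<Prod>r\<in>{0..<n} - {k}. B r (p r))"

lemma Bdom_le: "r < n \<Longrightarrow> c < n \<Longrightarrow> mle (B r c * B r c) (B r r * B c c)"
  by (cases "r = c") (auto intro: mlt_imp_mle Bdom)

lemma PL:
  assumes C: "C \<subseteq> {0..<n}" and f: "bij_betw f C C"
  shows "mle (\<Prod>r\<in>C. B r (f r)) (\<Prod>r\<in>C. B r r)"
    and "r0 \<in> C \<Longrightarrow> f r0 \<noteq> r0 \<Longrightarrow> mlt (\<Prod>r\<in>C. B r (f r)) (\<Prod>r\<in>C. B r r)"
proof -
  have fin: "finite C" using C finite_subset by blast
  have fC: "r \<in> C \<Longrightarrow> f r \<in> C" for r using f by (auto simp: bij_betw_def)
  have fCn: "r \<in> C \<Longrightarrow> f r < n" for r using fC C by fastforce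
  have Cn: "r \<in> C \<Longrightarrow> r < n" for r using C by fastforce
  have sq: "(\<Prod>r\<in>C. B r (f r)) * (\<Prod>r\<in>C. B r (f r)) = (\<Prod>r\<in>C. B r (f r) * B r (f r))"
    by (simp add: prod.distrib)
  have eq: "(\<Prod>r\<in>C. B r r * B (f r) (f r)) = (\<Prod>r\<in>C. B r r) * (\<Prod>r\<in>C. B r r)"
    by (simp add: prod.distrib prod.reindex_bij_betw[OF f, of "\<lambda>r. B r r"])
  have le: "mle (\<Prod>r\<in>C. B r (f r) * B r (f r)) (\<Prod>r\<in>C. B r r * B (f r) (f r))"
    using Cn fCn by (intro mle_prod) (auto intro!: Bdom_le)
  show "mle (\<Prod>r\<in>C. B r (f r)) (\<Prod>r\<in>C. B r r)"
    by (rule mle_sq) (use le sq eq in simp)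
  assume r0: "r0 \<in> C" "f r0 \<noteq> r0"
  have lt: "mlt (\<Prod>r\<in>C. B r (f r) * B r (f r)) (\<Prod>r\<in>C. B r r * B (f r) (f r))"
  proof (rule mlt_prod[OF fin _ r0(1)])
    show "\<forall>x\<in>C. mle (B x (f x) * B x (f x)) (B x x * B (f x) (f x))"
      using Cn fCn by (auto intro!: Bdom_le)
    show "mlt (B r0 (f r0) * B r0 (f r0)) (B r0 r0 * B (f r0) (f r0))"
      using Cn fCn r0 by (auto intro!: Bdom)
    show "\<forall>x\<in>C. B x x * B (f x) (f x) \<noteq> 0"
      using Cn fCn by (auto simp: Brr_nz)
  qed
  show "mlt (\<Prod>r\<in>C. B r (f r)) (\<Prod>r\<in>C. B r r)"
    by (rule mlt_sq) (use lt sq eq in simp)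
qed

lemma G0:
  assumes mp: "mu permutes {0..<n}" and i: "i < n" and ik: "i \<noteq> k"
    and kC: "k \<notin> orbit mu i" and mi: "mu i \<noteq> i"
  shows "\<exists>rho. rho permutes {0..<n} \<and> rho k = i \<and>
     (B i (mu k) * pk mu = 0 \<or> mlt (B i (mu k) * pk mu) (B i i * pk rho))"
proof -
  define S where "S = {0..<n}"
  define C where "C = orbit mu i"
  have fin: "finite S" by (simp add: S_def)
  have mpS: "mu permutes S" using mp by (simp add: S_def)
  have perm: "permutation mu" using mpS fin by (auto simp: permutation_permutes)
  have iS: "i \<in> S" and kS: "k \<in> S" using i kn by (auto simp: S_def)
  have CS: "C \<subseteq> S" unfolding C_def by (rule permutes_orbit_subset[OF mpS iS])
  have iC: "i \<in> C" unfolding C_def by (rule permutation_self_in_orbit[OF perm])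
  have kC': "k \<notin> C" using kC by (simp add: C_def)
  have cyc: "cyclic_on mu C" unfolding C_def by (rule cyclic_on_orbit[OF mpS fin])
  have finC: "finite C" using CS fin finite_subset by blast
  have bij: "bij_betw mu C C"
  proof -
    have "mu ` C \<subseteq> C" unfolding C_def by (auto intro: orbit.step)
    moreover have "C \<subseteq> mu ` C"
    proof
      fix y assume y: "y \<in> C"
      have "mu (inv mu y) = y" by (rule permutes_inverses(1)[OF mpS])
      then have "inv mu y \<in> C" using cyclic_on_f_in[OF mpS cyc] y by metis
      then show "y \<in> mu ` C" using \<open>mu (inv mu y) = y\<close> by (metis imageI)
    qed
    ultimately show ?thesis by (auto simp: bij_betw_def permutes_inj_on[OF mpS])
  qed
  define R where "R = perm_restrict mu (S - C)"
  have RS: "R permutes S"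
    using permutes_subset[OF perm_restrict_diff_cyclic[OF mpS cyc]] by (auto simp: R_def)
  define rho where "rho = R \<circ> transpose i k"
  have rhoS: "rho permutes S" unfolding rho_def by (rule permutes_compose[OF permutes_swap_id[OF iS kS] RS])
  have rk: "rho k = i" using iC by (simp add: rho_def R_def perm_restrict_simps)
  have ri: "rho i = mu k" using kC' kS by (simp add: rho_def R_def perm_restrict_simps)
  have rC: "r \<in> C - {i} \<Longrightarrow> rho r = r" for r using kC' by (auto simp: rho_def R_def perm_restrict_simps transpose_def)
  have rO: "r \<in> S - C - {k} \<Longrightarrow> rho r = mu r" for r using iC by (auto simp: rho_def R_def perm_restrict_simps transpose_def)
  have dec: "S - {k} = C \<union> (S - C - {k})" using CS kC' by auto
  define Z where "Z = B i (mu k) * (\<Prod>r\<in>S - C - {k}. B r (mu r))"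
  have L: "B i (mu k) * pk mu = Z * (\<Prod>r\<in>C. B r (mu r))"
  proof -
    have "pk mu = (\<Prod>r\<in>C. B r (mu r)) * (\<Prod>r\<in>S - C - {k}. B r (mu r))"
      unfolding pk_def S_def[symmetric] dec using finC fin by (subst prod.union_disjoint) auto
    then show ?thesis by (simp add: Z_def ac_simps)
  qed
  have Rr: "B i i * pk rho = Z * (\<Prod>r\<in>C. B r r)"
  proof -
    have "pk rho = (\<Prod>r\<in>C. B r (rho r)) * (\<Prod>r\<in>S - C - {k}. B r (rho r))"
      unfolding pk_def S_def[symmetric] dec using finC fin by (subst prod.union_disjoint) auto
    also have "(\<Prod>r\<in>S - C - {k}. B r (rho r)) = (\<Prod>r\<in>S - C - {k}. B r (mu r))"
      by (rule prod.cong) (auto simp: rO)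
    also have "(\<Prod>r\<in>C. B r (rho r)) = B i (mu k) * (\<Prod>r\<in>C - {i}. B r (rho r))"
      using finC iC by (simp add: prod.remove ri)
    also have "(\<Prod>r\<in>C - {i}. B r (rho r)) = (\<Prod>r\<in>C - {i}. B r r)"
      by (rule prod.cong) (auto simp: rC)
    finally have "pk rho = B i (mu k) * (\<Prod>r\<in>C - {i}. B r r) * (\<Prod>r\<in>S - C - {k}. B r (mu r))" .
    moreover have "(\<Prod>r\<in>C. B r r) = B i i * (\<Prod>r\<in>C - {i}. B r r)"
      using finC iC by (simp add: prod.remove)
    ultimately show ?thesis by (simp add: Z_def ac_simps)
  qed
  have lt: "mlt (\<Prod>r\<in>C. B r (mu r)) (\<Prod>r\<in>C. B r r)"
    using PL(2)[OF CS[unfolded S_def] bij iC mi] .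
  show ?thesis
  proof (intro exI[of _ rho] conjI)
    show "rho permutes {0..<n}" using rhoS by (simp add: S_def)
    show "rho k = i" by (rule rk)
    show "B i (mu k) * pk mu = 0 \<or> mlt (B i (mu k) * pk mu) (B i i * pk rho)"
    proof (cases "Z = 0")
      case True then show ?thesis using L by simp
    next
      case False
      have "mlt ((\<Prod>r\<in>C. B r (mu r)) * Z) ((\<Prod>r\<in>C. B r r) * Z)"
        by (rule mlt_mult[OF lt mle_refl False])
      then show ?thesis using L Rr by (simp add: ac_simps)
    qed
  qed
qed

lemma G:
  assumes tp: "t permutes {0..<n}" and i: "i < n" and ik: "i \<noteq> k"
    and tk: "t k \<noteq> i" and ti: "t i \<noteq> i"
  shows "\<exists>rho. rho permutes {0..<n} \<and> rho k = i \<and>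
     (B i (t k) * pk t = 0 \<or> mlt (B i (t k) * pk t) (B i i * pk rho))"
proof (cases "k \<in> orbit t i")
  case False then show ?thesis using G0[OF tp i ik False ti] by simp
next
  case True
  define nu where "nu = t \<circ> transpose i k"
  have kS: "k \<in> {0..<n}" and iS: "i \<in> {0..<n}" using kn i by auto
  have nup: "nu permutes {0..<n}" unfolding nu_def by (rule permutes_compose[OF permutes_swap_id[OF iS kS] tp])
  have kno: "k \<notin> orbit nu i" unfolding nu_def by (rule split_orbit[OF tp _ ik True]) simp
  have nui: "nu i \<noteq> i" using tk by (simp add: nu_def)
  have eq: "B i (nu k) * pk nu = B i (t k) * pk t"
  proof -
    have fin: "finite ({0..<n} - {k} - {i})" by simp
    have "pk nu = B i (nu i) * (\<Prod>r\<in>{0..<n} - {k} - {i}. B r (nu r))"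
      unfolding pk_def using iS ik by (subst prod.remove[of _ i]) auto
    also have "(\<Prod>r\<in>{0..<n} - {k} - {i}. B r (nu r)) = (\<Prod>r\<in>{0..<n} - {k} - {i}. B r (t r))"
      by (rule prod.cong) (auto simp: nu_def transpose_def)
    also have "nu i = t k" by (simp add: nu_def)
    finally have 1: "pk nu = B i (t k) * (\<Prod>r\<in>{0..<n} - {k} - {i}. B r (t r))" .
    have nuk: "nu k = t i" by (simp add: nu_def)
    have 2: "pk t = B i (t i) * (\<Prod>r\<in>{0..<n} - {k} - {i}. B r (t r))"
      unfolding pk_def using iS ik by (subst prod.remove[of _ i]) auto
    show ?thesis using 1 2 nuk by (simp add: ac_simps)
  qed
  show ?thesis using G0[OF nup i ik kno nui] eq by simp
qed

end

lemma dominant_sum: "finite T \<Longrightarrow> x0 \<in> T \<Longrightarrow> (\<forall>x\<in>T - {x0}. mlt (f x) (f x0)) \<Longrightarrow>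
  sum f T = (f x0 :: 'g::linordered_ab_group_add smax)"
  by (rule sum_all_x[of T f "f x0" x0]) auto

lemma bij_minus_fixed: "p permutes S \<Longrightarrow> p k = k \<Longrightarrow> bij_betw p (S - {k}) (S - {k})"
proof -
  assume pS: "p permutes S" and pk: "p k = k"
  have "p ` (S - {k}) = p ` S - p ` {k}" by (rule image_set_diff[OF permutes_inj[OF pS]])
  then have "p ` (S - {k}) = S - {k}" using pk permutes_image[OF pS] by simp
  then show ?thesis by (auto simp: bij_betw_def permutes_inj_on[OF pS])
qed

lemma balanced_row_sum: "finite T \<Longrightarrow> balanced a \<Longrightarrow> (\<forall>x\<in>T. mle (f x) a) \<Longrightarrow>
   balanced (a + sum f T :: 'g::linordered_ab_group_add smax)"
  by (rule balanced_dom) (auto simp: mle_sum_iff)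

context bm
begin

definition V :: "nat \<Rightarrow> 'g smax" where
  "V j = (\<Sum>p\<in>{p. p permutes {0..<n} \<and> p k = j}. sg p * pk p)"

lemma finP: "finite {p. p permutes {0..<n} \<and> P p}"
  using finite_permutations[of "{0..<n}"] by (rule finite_subset[rotated]) auto

lemma sg_id: "sg id = 1" by (simp add: sg_def)

lemma V_k: "V k = (\<Prod>r\<in>{0..<n} - {k}. B r r)"
proof -
  have "V k = sg id * pk id"
    unfolding V_def
  proof (rule dominant_sum[OF finP])
    show "id \<in> {p. p permutes {0..<n} \<and> p k = k}" by (simp add: permutes_id)
    show "\<forall>x\<in>{p. p permutes {0..<n} \<and> p k = k} - {id}. mlt (sg x * pk x) (sg id * pk id)"
    proof
      fix p assume p: "p \<in> {p. p permutes {0..<n} \<and> p k = k} - {id}"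
      then have pS: "p permutes {0..<n}" and pkk: "p k = k" and pid: "p \<noteq> id" by auto
      obtain r where r: "p r \<noteq> r" using pid by (auto simp: fun_eq_iff)
      have rS: "r \<in> {0..<n} - {k}" using r pkk permutes_not_in[OF pS, of r] by auto
      have "mlt (\<Prod>r\<in>{0..<n} - {k}. B r (p r)) (\<Prod>r\<in>{0..<n} - {k}. B r r)"
        by (rule PL(2)[OF _ bij_minus_fixed[OF pS pkk] rS r]) auto
      then show "mlt (sg p * pk p) (sg id * pk id)" by (simp add: pk_def sg_id)
    qed
  qed
  then show ?thesis by (simp add: sg_id pk_def)
qed

lemma prod_signed: "finite T \<Longrightarrow> (\<forall>x\<in>T. signed (f x)) \<Longrightarrow> signed (prod f T :: 'g smax)"
  by (induction T rule: finite_induct) (auto simp: signed_mult signed_def zo)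

lemma V_k_signed: "signed (V k)"
proof -
  have "\<forall>r\<in>{0..<n} - {k}. signed (B r r)" using Brr by auto
  then show ?thesis unfolding V_k by (intro prod_signed) auto
qed

lemma V_k_nz: "V k \<noteq> 0"
  unfolding V_k using Brr_nz by (auto simp: prod_eq0_iff)

lemma row_expand:
  assumes J: "J \<subseteq> {0..<n}"
  shows "(\<Sum>s\<in>J. B i s * V s) = (\<Sum>p\<in>{p. p permutes {0..<n} \<and> p k \<in> J}. sg p * (B i (p k) * pk p))"
proof -
  have finJ: "finite J" using J finite_subset by blast
  have "(\<Sum>s\<in>J. B i s * V s) = (\<Sum>s\<in>J. \<Sum>p\<in>{p \<in> {p. p permutes {0..<n} \<and> p k \<in> J}. p k = s}. sg p * (B i (p k) * pk p))"
  proof (rule sum.cong[OF refl])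
    fix s assume s: "s \<in> J"
    have e: "{p \<in> {p. p permutes {0..<n} \<and> p k \<in> J}. p k = s} = {p. p permutes {0..<n} \<and> p k = s}"
      using s by auto
    show "B i s * V s = (\<Sum>p\<in>{p \<in> {p. p permutes {0..<n} \<and> p k \<in> J}. p k = s}. sg p * (B i (p k) * pk p))"
      unfolding e V_def sum_distrib_left by (rule sum.cong) (auto simp: ac_simps)
  qed
  also have "\<dots> = (\<Sum>p\<in>{p. p permutes {0..<n} \<and> p k \<in> J}. sg p * (B i (p k) * pk p))"
    by (rule sum.group[OF finP finJ]) auto
  finally show ?thesis .
qed

lemma pk_split: "i < n \<Longrightarrow> i \<noteq> k \<Longrightarrow> pk p = B i (p i) * (\<Prod>r\<in>{0..<n} - {k} - {i}. B r (p r))"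
  unfolding pk_def by (subst prod.remove[of _ i]) auto

lemma E:
  assumes i: "i < n" and ik: "i \<noteq> k"
  shows "(\<Sum>s\<in>{0..<n} - {i}. B i s * V s) = \<ominus> (B i i * V i)"
proof -
  define Q where "Q = {p. p permutes {0..<n} \<and> p k \<in> {0..<n} - {i}}"
  define Q1 where "Q1 = {p \<in> Q. p i = i}"
  define Q2 where "Q2 = {p \<in> Q. p i \<noteq> i}"
  define h where "h = (\<lambda>p. sg p * (B i (p k) * pk p))"
  have finQ: "finite Q" unfolding Q_def by (rule finP)
  have "(\<Sum>s\<in>{0..<n} - {i}. B i s * V s) = sum h Q"
    unfolding Q_def h_def by (rule row_expand) auto
  also have "Q = Q1 \<union> Q2" by (auto simp: Q1_def Q2_def)
  also have "sum h (Q1 \<union> Q2) = sum h Q1 + sum h Q2"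
    by (rule sum.union_disjoint) (use finQ in \<open>auto simp: Q1_def Q2_def\<close>)
  also have "sum h Q1 = \<ominus> (B i i * V i)"
  proof -
    define tr where "tr = transpose i k"
    have "\<ominus> (B i i * V i) = (\<Sum>p\<in>{p. p permutes {0..<n} \<and> p k = i}. \<ominus> (B i i * (sg p * pk p)))"
      by (simp add: V_def sum_distrib_left sminus_sum finP)
    also have "\<dots> = sum h Q1"
    proof (rule sum.reindex_bij_witness[where i="\<lambda>p. p \<circ> tr" and j="\<lambda>p. p \<circ> tr"])
      have trtr: "tr \<circ> tr = id" by (simp add: tr_def fun_eq_iff transpose_def)
      show "a \<circ> tr \<circ> tr = a" for a :: "nat \<Rightarrow> nat" by (simp add: o_assoc[symmetric] trtr)
      show "a \<circ> tr \<circ> tr = a" for a :: "nat \<Rightarrow> nat" by (simp add: o_assoc[symmetric] trtr)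
      have trS: "tr permutes {0..<n}" unfolding tr_def using i kn by (intro permutes_swap_id) auto
      fix p
      assume p: "p \<in> {p. p permutes {0..<n} \<and> p k = i}"
      then have pS: "p permutes {0..<n}" and pki: "p k = i" by auto
      have pii: "p i \<noteq> i" using pki ik permutes_inj[OF pS] by (metis injD)
      have piS: "p i < n" using permutes_in_image[OF pS] i by auto
      show "p \<circ> tr \<in> Q1"
        using permutes_compose[OF trS pS] pki pii piS by (auto simp: Q1_def Q_def tr_def)
      have perm: "permutation p" using pS by (auto simp: permutation_permutes)
      have sgq: "sg (p \<circ> tr) = \<ominus> (sg p :: 'g smax)" unfolding tr_def by (rule sg_swap_comp[OF perm ik])
      have pc: "(\<Prod>r\<in>{0..<n} - {k} - {i}. B r ((p \<circ> tr) r)) = (\<Prod>r\<in>{0..<n} - {k} - {i}. B r (p r))"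
        by (rule prod.cong) (auto simp: tr_def transpose_def)
      have pkq: "pk (p \<circ> tr) = B i i * (\<Prod>r\<in>{0..<n} - {k} - {i}. B r (p r))"
        using pk_split[OF i ik, of "p \<circ> tr"] pki unfolding pc by (simp add: tr_def)
      have pkp: "pk p = B i (p i) * (\<Prod>r\<in>{0..<n} - {k} - {i}. B r (p r))" by (rule pk_split[OF i ik])
      show "h (p \<circ> tr) = \<ominus> (B i i * (sg p * pk p))"
        unfolding h_def sgq pkq pkp by (simp add: tr_def sminus_mult ac_simps)
    next
      fix q assume q: "q \<in> Q1"
      have trS: "tr permutes {0..<n}" unfolding tr_def using i kn by (intro permutes_swap_id) auto
      from q have qS: "q permutes {0..<n}" and qi: "q i = i" by (auto simp: Q1_def Q_def)
      show "q \<circ> tr \<in> {p. p permutes {0..<n} \<and> p k = i}"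
        using permutes_compose[OF trS qS] qi by (simp add: tr_def)
    qed
    finally show ?thesis by simp
  qed
  also have "\<ominus> (B i i * V i) + sum h Q2 = \<ominus> (B i i * V i)"
  proof (rule sum_absorb)
    show "finite Q2" using finQ by (simp add: Q2_def)
    show "\<forall>t\<in>Q2. h t = \<ominus> (B i i * V i) \<or> h t = 0 \<or> mlt (h t) (\<ominus> (B i i * V i))"
    proof
      fix p assume p: "p \<in> Q2"
      then have pS: "p permutes {0..<n}" and pk: "p k \<noteq> i" and pii: "p i \<noteq> i"
        by (auto simp: Q2_def Q_def)
      obtain rho where rho: "rho permutes {0..<n}" "rho k = i"
        and alt: "B i (p k) * pk p = 0 \<or> mlt (B i (p k) * pk p) (B i i * pk rho)"
        using G[OF pS i ik pk pii] by blast
      have "mle (sg rho * pk rho) (V i)"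
        unfolding V_def by (rule mle_sum_term[OF finP]) (use rho in simp)
      then have "mle (B i i * pk rho) (B i i * V i)" by (intro mle_mult) auto
      with alt show "h p = \<ominus> (B i i * V i) \<or> h p = 0 \<or> mlt (h p) (\<ominus> (B i i * V i))"
        by (auto simp: h_def intro: mlt_mle_trans)
    qed
  qed
  finally show ?thesis .
qed

lemma Rk:
  assumes s: "s < n"
  shows "mle (B k s * V s) (B k k * V k)"
proof -
  have "B k s * V s = (\<Sum>p\<in>{p. p permutes {0..<n} \<and> p k = s}. sg p * (B k s * pk p))"
    by (simp add: V_def sum_distrib_left ac_simps)
  moreover have "mle (sg p * (B k s * pk p)) (B k k * V k)" if p: "p \<in> {p. p permutes {0..<n} \<and> p k = s}" for p
  proof -
    from p have pS: "p permutes {0..<n}" and pks: "p k = s" by auto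
    have kS: "k \<in> {0..<n}" using kn by simp
    have "B k s * pk p = (\<Prod>r\<in>{0..<n}. B r (p r))"
      unfolding pk_def using kS pks by (simp add: prod.remove[of _ k])
    moreover have "(\<Prod>r\<in>{0..<n}. B r r) = B k k * V k"
      unfolding V_k using kS by (simp add: prod.remove[of _ k])
    moreover have "mle (\<Prod>r\<in>{0..<n}. B r (p r)) (\<Prod>r\<in>{0..<n}. B r r)"
      by (rule PL(1)[OF _ permutes_imp_bij[OF pS]]) simp
    ultimately show ?thesis by simp
  qed
  ultimately show ?thesis by (simp add: mle_sum_iff finP)
qed

lemma row_V_balanced:
  assumes i: "i < n"
  shows "balanced (\<Sum>s\<in>{0..<n}. B i s * V s)"
proof -
  have split: "(\<Sum>s\<in>{0..<n}. B i s * V s) = B i i * V i + (\<Sum>s\<in>{0..<n} - {i}. B i s * V s)"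
    using i by (simp add: sum.remove[of _ i])
  show ?thesis
  proof (cases "i = k")
    case True
    have "balanced (B k k * V k + (\<Sum>s\<in>{0..<n} - {k}. B k s * V s))"
      by (rule balanced_row_sum) (auto simp: Rk balanced_mult Bkk_bal)
    then show ?thesis using split True by simp
  next
    case False
    show ?thesis unfolding split E[OF i False] by (rule balanced_self)
  qed
qed

end

lemma ex_max: "finite T \<Longrightarrow> T \<noteq> {} \<Longrightarrow> \<exists>x\<in>T. \<forall>z\<in>T. mle (f z) (f x :: 'g::linordered_ab_group_add smax)"
proof (induction T rule: finite_ne_induct)
  case (singleton x) then show ?case by simp
next
  case (insert x F)
  then obtain m where m: "m \<in> F" "\<forall>z\<in>F. mle (f z) (f m)" by blast
  show ?case
  proof (cases "mle (f x) (f m)")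
    case True then show ?thesis using m by auto
  next
    case False then have "mle (f m) (f x)" using mle_total by blast
    then show ?thesis using m by (auto intro: mle_trans)
  qed
qed

lemma ex_min: "finite T \<Longrightarrow> T \<noteq> {} \<Longrightarrow> \<exists>x\<in>T. \<forall>z\<in>T. mle (f x) (f z :: 'g::linordered_ab_group_add smax)"
proof (induction T rule: finite_ne_induct)
  case (singleton x) then show ?case by simp
next
  case (insert x F)
  then obtain m where m: "m \<in> F" "\<forall>z\<in>F. mle (f m) (f z)" by blast
  show ?case
  proof (cases "mle (f m) (f x)")
    case True then show ?thesis using m by auto
  next
    case False then have "mle (f x) (f m)" using mle_total by blast
    then show ?thesis using m by (auto intro: mle_trans)
  qed
qed

lemma smod_mult: "smod ((a::'g::linordered_ab_group_add smax) * b) = smod a * smod b"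
  by (cases a; cases b) (auto simp: zo)

lemma smod_minus[simp]: "smod (\<ominus> a) = smod a"
  by (cases a) auto

lemma smod_signed: "signed (smod a)"
  by (cases a) (auto simp: signed_def zo)

lemma smod_0_iff: "smod a = 0 \<longleftrightarrow> (a::'g::linordered_ab_group_add smax) = 0"
  by (cases a) (auto simp: zo)

lemma smod_smod[simp]: "smod (smod a) = smod a"
  by (cases a) auto

lemma smod_mle_l: "smod a = smod b \<Longrightarrow> mle a c \<longleftrightarrow> mle b c"
  by (auto simp: smod_eq_iff intro: mle_trans)
lemma smod_mle_r: "smod a = smod b \<Longrightarrow> mle c a \<longleftrightarrow> mle c b"
  by (auto simp: smod_eq_iff intro: mle_trans)
lemma smod_mlt_l: "smod a = smod b \<Longrightarrow> mlt a c \<longleftrightarrow> mlt b c"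
  by (auto simp: smod_eq_iff not_mle[symmetric] intro: mle_trans)
lemma smod_mlt_r: "smod a = smod b \<Longrightarrow> mlt c a \<longleftrightarrow> mlt c b"
  by (auto simp: smod_eq_iff not_mle[symmetric] intro: mle_trans)

lemma mle_smod_l: "mle (smod a) c \<longleftrightarrow> mle a c" by (cases a; cases c) (auto simp: mle_def zo)
lemma smod_of_signed: "signed a \<Longrightarrow> smod a = smod b \<Longrightarrow> signed b \<Longrightarrow> a = b \<or> a = \<ominus> b"
  by (cases a; cases b) (auto simp: signed_def zo)

context bm
begin

definition U :: "(nat \<Rightarrow> 'g smax) \<Rightarrow> nat \<Rightarrow> 'g smax" where
  "U y x = B x x * y x * y x"

definition exact :: "(nat \<Rightarrow> 'g smax) \<Rightarrow> bool" where
  "exact y \<longleftrightarrow> (\<forall>i<n. i \<noteq> k \<longrightarrow> (\<Sum>s\<in>{0..<n} - {i}. B i s * y s) = \<ominus> (B i i * y i))"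

definition row :: "nat \<Rightarrow> (nat \<Rightarrow> 'g smax) \<Rightarrow> 'g smax" where
  "row i v = (\<Sum>s\<in>{0..<n}. B i s * v s)"

lemma row_split: "i < n \<Longrightarrow> row i v = B i i * v i + (\<Sum>s\<in>{0..<n} - {i}. B i s * v s)"
  unfolding row_def by (simp add: sum.remove[of _ i])

lemma pot:
  assumes i: "i < n" and s: "s < n" and ins: "i \<noteq> s"
    and le: "mle (B i i * x) (B i s * z)" and x: "x \<noteq> 0"
  shows "mlt (B i i * x * x) (B s s * z * z)"
proof -
  have bi: "B i i \<noteq> 0" using Brr_nz i by simp
  have z: "z \<noteq> 0" using le x bi by (auto simp: mle_def)
  have sq: "mle ((B i i * x) * (B i i * x)) ((B i s * z) * (B i s * z))" by (rule mle_mult[OF le le])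
  have lt: "mlt ((B i s * B i s) * (z * z)) ((B i i * B s s) * (z * z))"
    by (rule mlt_mult[OF Bdom[OF i s ins] mle_refl]) (simp add: z)
  have "mlt ((B i i * x) * (B i i * x)) ((B i i * B s s) * (z * z))"
    using mle_mlt_trans[OF sq] lt by (simp add: ac_simps)
  then have "mlt ((B i i * x * x) * B i i) ((B s s * z * z) * B i i)" by (simp add: ac_simps)
  then show ?thesis by (rule mlt_mult_cancel)
qed

lemma exact_le:
  assumes ex: "exact y" and j: "j < n" "j \<noteq> k" and i: "i < n" "i \<noteq> j"
  shows "mle (B j i * y i) (B j j * y j)"
proof -
  have "mle (B j i * y i) (\<Sum>s\<in>{0..<n} - {j}. B j s * y s)"
    by (rule mle_sum_term[where f="\<lambda>s. B j s * y s"]) (use i in auto)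
  then show ?thesis using ex j by (simp add: exact_def)
qed

lemma crit:
  assumes ex: "exact y" and j: "j < n" "j \<noteq> k" and i: "i < n" "i \<noteq> j"
    and le: "mle (U y i) (U y j)"
  shows "B j i * y i = 0 \<or> mlt (B j i * y i) (B j j * y j)"
proof (rule ccontr)
  assume "\<not> ?thesis"
  then have nz: "B j i * y i \<noteq> 0" and ge: "mle (B j j * y j) (B j i * y i)" by (auto simp: not_mlt)
  have "mle (B j i * y i) (B j j * y j)" by (rule exact_le[OF ex j i])
  then have yj: "y j \<noteq> 0" using nz by auto
  have "mlt (B j j * y j * y j) (B i i * y i * y i)"
    by (rule pot[OF j(1) i(1) _ ge yj]) (use i in auto)
  then show False using le by (simp add: U_def not_mlt[symmetric])
qed

lemma crit_up:
  assumes ex: "exact y" and i: "i < n" "i \<noteq> k" and s: "s < n" "s \<noteq> i"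
    and eq: "B i s * y s = \<ominus> (B i i * y i)" and yi: "signed (y i)" "y i \<noteq> 0"
  shows "signed (y s) \<and> y s \<noteq> 0 \<and> mlt (U y i) (U y s)"
proof -
  have bi: "B i i \<noteq> 0" "signed (B i i)" using Brr_nz Brr i by auto
  have sx: "signed (B i s * y s)" "B i s * y s \<noteq> 0"
    unfolding eq using bi yi by (auto intro: signed_mult)
  have "signed (y s)" using signed_mult_D[OF sx] by simp
  moreover have "y s \<noteq> 0" using sx by auto
  moreover have "mle (B i i * y i) (B i s * y s)" unfolding eq by simp
  then have "mlt (B i i * y i * y i) (B s s * y s * y s)" by (rule pot[OF i(1) s(1) s(2)[symmetric] _ yi(2)])
  ultimately show ?thesis by (simp add: U_def)
qed

lemma sum_to_x:
  assumes ex: "exact y" and i: "i < n" "i \<noteq> k" and yi: "signed (y i)" "y i \<noteq> 0"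
    and good: "\<forall>s\<in>{0..<n} - {i}. B i s * y s = \<ominus> (B i i * y i) \<longrightarrow> v s = y s"
    and bnd: "\<forall>s\<in>{0..<n} - {i}. mle (v s) (y s)"
  shows "(\<Sum>s\<in>{0..<n} - {i}. B i s * v s) = \<ominus> (B i i * y i)"
proof -
  define x where "x = \<ominus> (B i i * y i)"
  have bi: "B i i \<noteq> 0" "signed (B i i)" using Brr_nz Brr i by auto
  have xs: "signed x" "x \<noteq> 0" using bi yi by (auto simp: x_def intro: signed_mult)
  have sumx: "(\<Sum>s\<in>{0..<n} - {i}. B i s * y s) = x" using ex i by (simp add: exact_def x_def)
  have terms: "\<forall>s\<in>{0..<n} - {i}. B i s * y s = x \<or> mlt (B i s * y s) x"
    by (rule sum_signed_terms[OF _ sumx xs]) simp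
  have ex_t: "\<exists>s\<in>{0..<n} - {i}. B i s * y s = x"
  proof (rule ccontr)
    assume "\<not> ?thesis"
    then have "mlt (\<Sum>s\<in>{0..<n} - {i}. B i s * y s) x" using terms xs by (auto intro!: mlt_sum)
    then show False using sumx by simp
  qed
  then obtain t where t: "t \<in> {0..<n} - {i}" "B i t * y t = x" by blast
  show ?thesis unfolding x_def[symmetric]
  proof (rule sum_all_x[of _ _ _ t])
    show "t \<in> {0..<n} - {i}" by (rule t(1))
    show "B i t * v t = x" using t good by (simp add: x_def)
    show "\<forall>s\<in>{0..<n} - {i}. B i s * v s = x \<or> B i s * v s = 0 \<or> mlt (B i s * v s) x"
    proof
      fix s assume s: "s \<in> {0..<n} - {i}"
      show "B i s * v s = x \<or> B i s * v s = 0 \<or> mlt (B i s * v s) x"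
      proof (cases "B i s * y s = x")
        case True then show ?thesis using good s by (simp add: x_def)
      next
        case False
        then have "mlt (B i s * y s) x" using terms s by auto
        moreover have "mle (B i s * v s) (B i s * y s)" using bnd s by (intro mle_mult) auto
        ultimately show ?thesis by (auto intro: mle_mlt_trans)
      qed
    qed
  qed simp
qed

lemma row_nonbal:
  assumes i: "i < n" "i \<noteq> k" and vi: "signed (v i)" "v i \<noteq> 0" and bal: "balanced (row i v)"
  shows "\<exists>s\<in>{0..<n} - {i}. mle (B i i * v i) (B i s * v s)"
proof (rule ccontr)
  assume "\<not> ?thesis"
  then have all: "\<forall>s\<in>{0..<n} - {i}. mlt (B i s * v s) (B i i * v i)" by (auto simp: not_mle)
  have bi: "B i i \<noteq> 0" "signed (B i i)" using Brr_nz Brr i by auto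
  have "mlt (\<Sum>s\<in>{0..<n} - {i}. B i s * v s) (B i i * v i)"
    by (rule mlt_sum) (use all bi vi in auto)
  then have "row i v = B i i * v i" unfolding row_split[OF i(1)] by (rule mlt_absorb2)
  moreover have "signed (B i i * v i)" "B i i * v i \<noteq> 0" using bi vi by (auto intro: signed_mult)
  ultimately show False using bal signed_balanced by metis
qed

lemma vk_nonzero:
  assumes vs: "\<forall>i<n. signed (v i)" and nz: "\<exists>i<n. v i \<noteq> 0"
    and rows: "\<forall>i<n. i \<noteq> k \<longrightarrow> balanced (row i v)"
  shows "v k \<noteq> 0"
proof -
  define NZ where "NZ = {i\<in>{0..<n}. v i \<noteq> 0}"
  have "finite NZ" "NZ \<noteq> {}" using nz by (auto simp: NZ_def)
  then obtain i where i: "i \<in> NZ" and mx: "\<forall>z\<in>NZ. mle (U v z) (U v i)" using ex_max by blast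
  show ?thesis
  proof (cases "i = k")
    case True then show ?thesis using i by (simp add: NZ_def)
  next
    case False
    have il: "i < n" "v i \<noteq> 0" using i by (auto simp: NZ_def)
    have svi: "signed (v i)" using vs il by simp
    have bri: "balanced (row i v)" using rows il False by simp
    obtain s where s: "s \<in> {0..<n} - {i}" "mle (B i i * v i) (B i s * v s)"
      using row_nonbal[OF il(1) False svi il(2) bri] by blast
    have lt: "mlt (U v i) (U v s)" unfolding U_def using pot[OF il(1) _ _ s(2) il(2)] s(1) by auto
    have "v s \<noteq> 0" using s(2) il Brr_nz by (auto simp: mle_def)
    then have "s \<in> NZ" using s by (auto simp: NZ_def)
    then show ?thesis using mx lt by (auto simp: not_mlt[symmetric])
  qed
qed

lemma part3:
  assumes ex: "exact y" and vs: "\<forall>i<n. signed (v i)"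
    and rows: "\<forall>i<n. i \<noteq> k \<longrightarrow> balanced (row i v)" and vk: "v k = y k"
  shows "\<forall>i<n. nabla (v i) (y i)"
proof -
  have bound: "\<forall>i<n. mle (v i) (y i)"
  proof (rule ccontr)
    assume nb: "\<not> (\<forall>i<n. mle (v i) (y i))"
    define Bad where "Bad = {i\<in>{0..<n}. \<not> mle (v i) (y i)}"
    have "finite Bad" "Bad \<noteq> {}" using nb by (auto simp: Bad_def)
    then obtain i where i: "i \<in> Bad" and mx: "\<forall>z\<in>Bad. mle (U v z) (U v i)" using ex_max by blast
    have il: "i < n" and lt: "mlt (y i) (v i)" using i by (auto simp: Bad_def not_mle)
    have ik: "i \<noteq> k" using i vk by (auto simp: Bad_def)
    have vi: "v i \<noteq> 0" using lt by (auto simp: mlt_def)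
    have svi: "signed (v i)" using vs il by simp
    have bri: "balanced (row i v)" using rows il ik by simp
    obtain s where s: "s \<in> {0..<n} - {i}" "mle (B i i * v i) (B i s * v s)"
      using row_nonbal[OF il ik svi vi bri] by blast
    have Ult: "mlt (U v i) (U v s)" unfolding U_def using pot[OF il _ _ s(2) vi] s(1) by auto
    have bi: "B i i \<noteq> 0" using Brr_nz il by simp
    have a1: "mle (B i s * y s) (B i i * y i)" using exact_le[OF ex il ik] s(1) by auto
    have a2: "mlt (B i i * y i) (B i i * v i)"
      using mlt_mult[OF lt mle_refl bi] by (simp add: ac_simps)
    have "mlt (B i s * y s) (B i s * v s)" using mlt_mle_trans[OF mle_mlt_trans[OF a1 a2] s(2)] .
    then have "mlt (y s) (v s)" by (metis mlt_mult_cancel mult.commute)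
    then have "s \<in> Bad" using s by (auto simp: Bad_def not_mle)
    then show False using mx Ult by (auto simp: not_mlt[symmetric])
  qed
  show ?thesis
  proof (rule ccontr)
    assume nb: "\<not> (\<forall>i<n. nabla (v i) (y i))"
    define Bad where "Bad = {i\<in>{0..<n}. \<not> nabla (v i) (y i)}"
    have "finite Bad" "Bad \<noteq> {}" using nb by (auto simp: Bad_def)
    then obtain i where i: "i \<in> Bad" and mx: "\<forall>z\<in>Bad. mle (U y z) (U y i)" using ex_max by blast
    have il: "i < n" and nn: "\<not> nabla (v i) (y i)" using i by (auto simp: Bad_def)
    have ik: "i \<noteq> k" using nn vk by (auto simp: nabla_def balanced_self)
    have bi: "B i i \<noteq> 0" "signed (B i i)" using Brr_nz Brr il ik by auto
    have vb: "mle (v i) (y i)" using bound il by auto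
    show False
    proof (cases "signed (y i) \<and> y i \<noteq> 0")
      case False
      then have "balanced (y i)" using signed_or_balanced by auto
      then have "balanced (\<ominus> (y i) + v i)" using vb by (intro balanced_dom) auto
      then show False using nn by (simp add: nabla_def add.commute)
    next
      case True
      have good: "\<forall>s\<in>{0..<n} - {i}. B i s * y s = \<ominus> (B i i * y i) \<longrightarrow> v s = y s"
      proof (intro ballI impI)
        fix s assume s: "s \<in> {0..<n} - {i}" and eq: "B i s * y s = \<ominus> (B i i * y i)"
        have cu: "signed (y s) \<and> y s \<noteq> 0 \<and> mlt (U y i) (U y s)"
          by (rule crit_up[OF ex il ik _ _ eq]) (use s True in auto)
        then have "s \<notin> Bad" using mx by (auto simp: not_mlt[symmetric])
        then have "nabla (v s) (y s)" using s by (auto simp: Bad_def)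
        then show "v s = y s" using signed_eq[of "v s" "y s"] vs cu s by (auto simp: nabla_def)
      qed
      have sx: "(\<Sum>s\<in>{0..<n} - {i}. B i s * v s) = \<ominus> (B i i * y i)"
        by (rule sum_to_x[OF ex il ik _ _ good]) (use True bound in auto)
      have "balanced (row i v)" using rows il ik by auto
      then have "balanced (B i i * v i + \<ominus> (B i i * y i))"
        unfolding row_split[OF il] sx .
      then have "B i i * v i = B i i * y i"
        using vs il True bi by (intro signed_eq) (auto intro: signed_mult)
      then have "sinv (B i i) * (B i i * v i) = sinv (B i i) * (B i i * y i)" by simp
      then have "(sinv (B i i) * B i i) * v i = (sinv (B i i) * B i i) * y i" by (simp only: mult.assoc)
      moreover have "sinv (B i i) * B i i = 1" using sinv_right[OF bi(2) bi(1)] by (simp add: mult.commute)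
      ultimately have "v i = y i" by simp
      then show False using nn by (simp add: nabla_def balanced_self)
    qed
  qed
qed

end

lemma smod_zero[simp]: "smod 0 = (0::'g::linordered_ab_group_add smax)" by (simp add: zo)

lemma smod_one: "smod (1::'g::linordered_ab_group_add smax) = 1" by (simp add: zo)

context bm
begin

definition basic :: "(nat \<Rightarrow> 'g smax) \<Rightarrow> (nat \<Rightarrow> 'g smax) \<Rightarrow> bool" where
  "basic y v \<longleftrightarrow> (\<forall>i<n. signed (v i) \<and> smod (v i) = smod (y i) \<and> (signed (y i) \<longrightarrow> v i = y i))"

lemma basic_term: "basic y v \<Longrightarrow> s < n \<Longrightarrow> smod (a * v s) = smod (a * y s)"
  by (simp add: basic_def smod_mult)

lemma basic_le: "basic y v \<Longrightarrow> s < n \<Longrightarrow> mle (v s) (y s)"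
  by (simp add: basic_def smod_eq_iff)

lemma basic_mle1: "basic y v \<Longrightarrow> s < n \<Longrightarrow> mle (a * v s) (a * y s)"
  using basic_term[of y v s a] by (simp add: smod_eq_iff)
lemma basic_mle2: "basic y v \<Longrightarrow> s < n \<Longrightarrow> mle (a * y s) (a * v s)"
  using basic_term[of y v s a] by (simp add: smod_eq_iff)

lemma row_k_ok:
  assumes yk: "signed (y k)" and Rky: "\<forall>s<n. mle (B k s * y s) (B k k * y k)" and b: "basic y v"
  shows "balanced (row k v)"
proof -
  have vk: "v k = y k" using b yk kn by (simp add: basic_def)
  have "balanced (B k k * y k + (\<Sum>s\<in>{0..<n} - {k}. B k s * v s))"
  proof (rule balanced_row_sum)
    show "balanced (B k k * y k)" by (rule balanced_mult[OF Bkk_bal])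
    show "\<forall>x\<in>{0..<n} - {k}. mle (B k x * v x) (B k k * y k)"
    proof
      fix x assume x: "x \<in> {0..<n} - {k}"
      then have "mle (B k x * v x) (B k x * y x)" using basic_mle1[OF b] by auto
      then show "mle (B k x * v x) (B k k * y k)" using Rky x by (auto intro: mle_trans)
    qed
  qed simp
  then show ?thesis using row_split[OF kn] vk by simp
qed

lemma row_signed_ok:
  assumes ex: "exact y" and b: "basic y v" and i: "i < n" "i \<noteq> k" and yi: "signed (y i)"
  shows "balanced (row i v)"
proof (cases "y i = 0")
  case True
  have "smod (v i) = smod (y i)" using b i by (auto simp: basic_def)
  then have vi: "v i = 0" using True by (simp add: smod_0_iff)
  have "B i s * v s = 0" if s: "s \<in> {0..<n} - {i}" for s
  proof -
    have "mle (B i s * y s) (B i i * y i)" using exact_le[OF ex i] s by auto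
    then have "B i s * y s = 0" using True by simp
    then have "smod (B i s * v s) = 0" using basic_term[OF b, of s "B i s"] s by (metis smod_zero DiffE atLeastLessThan_iff)
    then show ?thesis by (simp add: smod_0_iff)
  qed
  then have "(\<Sum>s\<in>{0..<n} - {i}. B i s * v s) = 0" by (rule sum.neutral[rule_format]) 
  then show ?thesis using vi row_split[OF i(1), of v] by simp
next
  case False
  have good: "\<forall>s\<in>{0..<n} - {i}. B i s * y s = \<ominus> (B i i * y i) \<longrightarrow> v s = y s"
  proof (intro ballI impI)
    fix s assume s: "s \<in> {0..<n} - {i}" and eq: "B i s * y s = \<ominus> (B i i * y i)"
    have "signed (y s)" using crit_up[OF ex i _ _ eq yi False] s by auto
    then show "v s = y s" using b s by (auto simp: basic_def)
  qed
  have sx: "(\<Sum>s\<in>{0..<n} - {i}. B i s * v s) = \<ominus> (B i i * y i)"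
    by (rule sum_to_x[OF ex i yi False good]) (use basic_le[OF b] in auto)
  have "v i = y i" using b i yi by (auto simp: basic_def)
  then show ?thesis unfolding row_split[OF i(1)] sx by (simp add: balanced_self)
qed

lemma row_indep:
  assumes b: "basic y w" and j: "j < n" and i: "i < n" "j \<noteq> i"
    and c: "B j i * y i = 0 \<or> mlt (B j i * y i) (B j j * y j)"
  shows "row j w = (\<Sum>s\<in>{0..<n} - {i}. B j s * w s)"
proof -
  have r: "row j w = B j i * w i + (\<Sum>s\<in>{0..<n} - {i}. B j s * w s)"
    unfolding row_def using i by (simp add: sum.remove[of _ i])
  have "mle (B j j * w j) (\<Sum>s\<in>{0..<n} - {i}. B j s * w s)"
    by (rule mle_sum_term[where f="\<lambda>s. B j s * w s"]) (use j i in auto)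
  then have Wge: "mle (B j j * y j) (\<Sum>s\<in>{0..<n} - {i}. B j s * w s)"
    using basic_mle2[OF b j, of "B j j"] by (rule mle_trans[rotated])
  have st: "smod (B j i * w i) = smod (B j i * y i)" by (rule basic_term[OF b i(1)])
  show ?thesis
  proof (cases "B j i * y i = 0")
    case True then have "smod (B j i * w i) = 0" using st by (metis smod_zero)
    then have z: "B j i * w i = 0" by (simp only: smod_0_iff)
    show ?thesis unfolding r z by simp
  next
    case False
    then have "mlt (B j i * y i) (B j j * y j)" using c by simp
    then have "mlt (B j i * w i) (\<Sum>s\<in>{0..<n} - {i}. B j s * w s)"
      using mle_mlt_trans[OF basic_mle1[OF b i(1)]] Wge by (blast intro: mlt_mle_trans)
    then show ?thesis using r by (simp add: mlt_absorb)
  qed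
qed

lemma constr:
  assumes ex: "exact y"
  shows "T \<subseteq> {0..<n} - {k} \<Longrightarrow> (\<forall>j\<in>T. \<forall>x\<in>{0..<n} - {k}. mlt (U y j) (U y x) \<longrightarrow> x \<in> T) \<Longrightarrow>
    \<exists>v. basic y v \<and> (\<forall>j\<in>T. balanced (row j v))"
proof (induction "card T" arbitrary: T rule: less_induct)
  case less
  show ?case
  proof (cases "T = {}")
    case True
    define v0 where "v0 = (\<lambda>i. if signed (y i) then y i else smod (y i))"
    have "basic y v0" by (auto simp: basic_def v0_def smod_signed)
    then show ?thesis using True by blast
  next
    case False
    have finT: "finite T" using less.prems(1) finite_subset by blast
    obtain i where iT: "i \<in> T" and mn: "\<forall>z\<in>T. mle (U y i) (U y z)" using ex_min[OF finT False] by blast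
    have il: "i < n" "i \<noteq> k" using iT less.prems(1) by auto
    define T' where "T' = T - {i}"
    have cardT': "card T' < card T" unfolding T'_def by (rule card_Diff1_less[OF finT iT])
    have subT': "T' \<subseteq> {0..<n} - {k}" using less.prems(1) by (auto simp: T'_def)
    have upT': "\<forall>j\<in>T'. \<forall>x\<in>{0..<n} - {k}. mlt (U y j) (U y x) \<longrightarrow> x \<in> T'"
    proof (intro ballI impI)
      fix j x assume j: "j \<in> T'" and x: "x \<in> {0..<n} - {k}" and lt: "mlt (U y j) (U y x)"
      have "x \<in> T" using less.prems(2) j x lt by (auto simp: T'_def)
      moreover have "x \<noteq> i"
      proof
        assume "x = i"
        then have "mlt (U y j) (U y i)" using lt by simp
        moreover have "mle (U y i) (U y j)" using mn j by (auto simp: T'_def)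
        ultimately show False by (simp add: not_mlt[symmetric])
      qed
      ultimately show "x \<in> T'" by (simp add: T'_def)
    qed
    obtain v where bv: "basic y v" and rv: "\<forall>j\<in>T'. balanced (row j v)"
      using less.hyps[OF cardT' subT' upT'] by blast
    show ?thesis
    proof (cases "signed (y i)")
      case True
      have "balanced (row i v)" by (rule row_signed_ok[OF ex bv il True])
      then show ?thesis using bv rv by (auto simp: T'_def)
    next
      case ns: False
      have bi: "B i i \<noteq> 0" "signed (B i i)" using Brr_nz Brr il by auto
      define Q where "Q = (\<Sum>s\<in>{0..<n} - {i}. B i s * v s)"
      have smQ: "smod Q = smod (B i i) * smod (y i)"
      proof -
        have "smod Q = smod (\<Sum>s\<in>{0..<n} - {i}. B i s * y s)"
          unfolding Q_def by (rule sum_smod_cong) (auto intro: basic_term[OF bv])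
        also have "\<dots> = smod (B i i) * smod (y i)" using ex il by (simp add: exact_def smod_mult)
        finally show ?thesis .
      qed
      define x where "x = (if signed Q then \<ominus> (Q * sinv (B i i)) else smod (y i))"
      define v' where "v' = v(i := x)"
      have sx: "signed x" using bi by (auto simp: x_def smod_signed intro: signed_mult sinv_signed)
      have smx: "smod x = smod (y i)"
      proof (cases "signed Q")
        case True
        have "smod x = smod Q * smod (sinv (B i i))" using True by (simp add: x_def smod_mult)
        also have "\<dots> = smod (B i i * sinv (B i i)) * smod (y i)" by (simp add: smQ smod_mult ac_simps)
        also have "\<dots> = smod (y i)" using sinv_right[OF bi(2) bi(1)] by (simp add: smod_one)
        finally show ?thesis .
      qed (simp add: x_def)
      have bv': "basic y v'" using bv sx smx ns by (auto simp: basic_def v'_def)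
      have Q': "(\<Sum>s\<in>{0..<n} - {i}. B i s * v' s) = Q" unfolding Q_def
        by (rule sum.cong) (auto simp: v'_def)
      have rowi: "balanced (row i v')"
      proof -
        have r: "row i v' = B i i * x + Q" using row_split[OF il(1), of v'] Q' by (simp add: v'_def)
        show ?thesis
        proof (cases "signed Q")
          case True
          have "B i i * x = \<ominus> (Q * (B i i * sinv (B i i)))" using True
            by (simp add: x_def mult_sminus ac_simps)
          then have "B i i * x = \<ominus> Q" using sinv_right[OF bi(2) bi(1)] by simp
          then show ?thesis unfolding r using balanced_self[of Q] by (simp add: add.commute)
        next
          case False
          then have "balanced Q" using signed_or_balanced by auto
          moreover have "smod (B i i * x) = smod Q" by (simp add: smod_mult smx smQ)
          then have "mle (B i i * x) Q" by (simp add: smod_eq_iff)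
          ultimately have "balanced (Q + B i i * x)" by (rule balanced_dom)
          then show ?thesis unfolding r by (simp add: add.commute)
        qed
      qed
      have rowsT': "balanced (row j v')" if j: "j \<in> T'" for j
      proof -
        have jl: "j < n" "j \<noteq> k" "j \<noteq> i" using j subT' by (auto simp: T'_def)
        have "mle (U y i) (U y j)" using mn j by (auto simp: T'_def)
        then have c: "B j i * y i = 0 \<or> mlt (B j i * y i) (B j j * y j)"
          by (rule crit[OF ex jl(1,2) il(1) jl(3)[symmetric]])
        have "row j v' = (\<Sum>s\<in>{0..<n} - {i}. B j s * v' s)" by (rule row_indep[OF bv' jl(1) il(1) jl(3) c])
        also have "\<dots> = (\<Sum>s\<in>{0..<n} - {i}. B j s * v s)" by (rule sum.cong) (auto simp: v'_def)
        also have "\<dots> = row j v" by (rule row_indep[OF bv jl(1) il(1) jl(3) c, symmetric])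
        finally show ?thesis using rv j by simp
      qed
      show ?thesis using bv' rowi rowsT' iT by (auto simp: T'_def)
    qed
  qed
qed

lemma part2:
  assumes ex: "exact y" and yk: "signed (y k)" and Rky: "\<forall>s<n. mle (B k s * y s) (B k k * y k)"
  shows "\<exists>v. basic y v \<and> (\<forall>i<n. balanced (row i v))"
proof -
  obtain v where b: "basic y v" and r: "\<forall>j\<in>{0..<n} - {k}. balanced (row j v)"
    using constr[OF ex, of "{0..<n} - {k}"] by auto
  have "balanced (row k v)" by (rule row_k_ok[OF yk Rky b])
  then show ?thesis using b r by (metis DiffI atLeastLessThan_iff singletonD zero_le)
qed

end

lemma sless_mlt: "sless a b \<Longrightarrow> (a = 0 \<or> spositive a) \<Longrightarrow> mlt a (b::'g::linordered_ab_group_add smax)"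
  apply (cases a; cases b)
  apply (auto simp: sless_def spositive_def mlt_def zo split: if_splits)
  done

lemma sq_pos: "signed a \<Longrightarrow> a * a = 0 \<or> spositive (a * (a::'g::linordered_ab_group_add smax))"
  by (cases a) (auto simp: signed_def spositive_def zo)

lemma pos_of_sless0: "sless 0 a \<Longrightarrow> \<exists>x. a = SElt SPos x"
  by (cases a) (auto simp: sless_def spositive_def zo)

lemma mle_diff: "mle a (b + \<ominus> (a::'g::linordered_ab_group_add smax))"
  using mle_add2[of "\<ominus> a" b] by simp

theorem corollary5p2:
  fixes A :: "nat \<Rightarrow> nat \<Rightarrow> 'g::linordered_ab_group_add smax" and n k :: nat
  assumes div: "divisible_group TYPE('g)"
    and tpd: "TPD n A"
    and sorted: "\<forall>i<n. \<forall>j<n. i \<le> j \<longrightarrow> spreceq (A j j) (A i i)"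
    and kn: "k < n"
    and simple: "card {i. i < n \<and> A i i = A k k} = 1"
  defines "vk \<equiv> (\<lambda>i. sadj n (shift_mat (A k k) A) i k)"
  shows "(weak_eigvec n A (A k k) vk \<and> signed (vk k) \<and> vk k \<noteq> 0)
    \<and> (\<exists>v. eigvec n A (A k k) v \<and> (\<forall>i<n. smod (v i) = smod (vk i)) \<and>
              (\<forall>i<n. signed (vk i) \<longrightarrow> v i = vk i))
    \<and> (\<forall>v. eigvec n A (A k k) v \<longrightarrow>
           (\<exists>c. signed c \<and> c \<noteq> 0 \<and> (\<forall>i<n. nabla (v i) (c * vk i))))"
proof -
  define g where "g = A k k"
  define B where "B = shift_mat g A"
  have Bij: "B i j = (if i = j then g else 0) + \<ominus> (A i j)" for i j by (simp add: B_def shift_mat_def)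
  have tpd1: "\<And>i j. i < n \<Longrightarrow> j < n \<Longrightarrow> signed (A i j)"
    and tpd2: "\<And>i. i < n \<Longrightarrow> sless 0 (A i i)"
    and tpd3: "\<And>i j. i < n \<Longrightarrow> j < n \<Longrightarrow> i \<noteq> j \<Longrightarrow> sless (A i j * A i j) (A i i * A j j)"
    using tpd by (auto simp: TPD_def)
  have distinct: "A r r \<noteq> g" if r: "r < n" "r \<noteq> k" for r
  proof
    assume eq: "A r r = g"
    have fin: "finite {i. i < n \<and> A i i = A k k}" by simp
    obtain a where a: "{i. i < n \<and> A i i = A k k} = {a}" using simple by (auto simp: card_1_singleton_iff)
    have "k \<in> {i. i < n \<and> A i i = A k k}" "r \<in> {i. i < n \<and> A i i = A k k}" using kn r eq by (auto simp: g_def)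
    then show False using a r by auto
  qed
  obtain gv where gv: "g = SElt SPos gv" using pos_of_sless0[OF tpd2[OF kn]] by (auto simp: g_def)
  have Arr_le: "mle (A r r) (B r r)" for r by (simp add: Bij mle_diff)
  interpret bm n k B
  proof
    show "k < n" by (rule kn)
    show "balanced (B k k)" by (simp add: Bij g_def balanced_self)
    show "signed (B r r)" if r: "r < n" "r \<noteq> k" for r
    proof -
      obtain d where d: "A r r = SElt SPos d" using pos_of_sless0[OF tpd2[OF r(1)]] by auto
      have "d \<noteq> gv" using distinct[OF r] d gv by auto
      then show ?thesis by (auto simp: Bij d gv signed_def)
    qed
    show "B r r \<noteq> 0" if r: "r < n" for r
      using pos_of_sless0[OF tpd2[OF r]] gv by (auto simp: Bij)
    show "mlt (B r c * B r c) (B r r * B c c)" if rc: "r < n" "c < n" "r \<noteq> c" for r c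
    proof -
      have "B r c * B r c = A r c * A r c" using rc by (simp add: Bij sminus_mult mult_sminus)
      moreover have "mlt (A r c * A r c) (A r r * A c c)"
        by (rule sless_mlt[OF tpd3[OF rc] sq_pos[OF tpd1[OF rc(1,2)]]])
      moreover have "mle (A r r * A c c) (B r r * B c c)" by (rule mle_mult[OF Arr_le Arr_le])
      ultimately show ?thesis by (simp add: mlt_mle_trans)
    qed
  qed
  have vkV: "vk i = V i" if i: "i < n" for i
    unfolding vk_def g_def[symmetric] B_def[symmetric] V_def pk_def
    by (rule sadj_formula[OF i kn])
  have rowvk: "row i vk = row i V" for i unfolding row_def by (rule sum.cong) (auto simp: vkV)
  have roweq: "nabla (mat_vec n A v i) (g * v i) \<longleftrightarrow> balanced (row i v)" if i: "i < n" for v i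
  proof -
    have "row i v = (\<Sum>s\<in>{0..<n}. (if i = s then g * v s else 0) + \<ominus> (A i s * v s))"
      unfolding row_def by (rule sum.cong) (auto simp: Bij distrib_right sminus_mult)
    also have "\<dots> = g * v i + \<ominus> (mat_vec n A v i)"
      using i by (simp add: sum.distrib sminus_sum mat_vec_def atLeast0LessThan)
    finally have "row i v = \<ominus> (mat_vec n A v i + \<ominus> (g * v i))" by (simp add: sminus_add add.commute)
    then show ?thesis by (simp add: nabla_def)
  qed
  have exV: "exact V" using E by (auto simp: exact_def)
  have nab: "\<forall>i<n. nabla (mat_vec n A vk i) (g * vk i)"
  proof (intro allI impI)
    fix i assume i: "i < n"
    have "balanced (row i V)" using row_V_balanced[OF i] by (simp add: row_def)
    then have "balanced (row i vk)" by (simp add: rowvk)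
    then show "nabla (mat_vec n A vk i) (g * vk i)" using roweq[OF i] by simp
  qed
  have P1: "weak_eigvec n A g vk \<and> signed (vk k) \<and> vk k \<noteq> 0"
    using V_k_signed V_k_nz kn nab by (auto simp: weak_eigvec_def vkV)
  have P2: "\<exists>v. eigvec n A g v \<and> (\<forall>i<n. smod (v i) = smod (vk i)) \<and> (\<forall>i<n. signed (vk i) \<longrightarrow> v i = vk i)"
  proof -
    obtain v where b: "basic V v" and r: "\<forall>i<n. balanced (row i v)"
      using part2[OF exV V_k_signed] Rk by blast
    have vk: "v k = V k" using b kn V_k_signed by (auto simp: basic_def)
    have "eigvec n A g v" unfolding eigvec_def
      using b r kn vk V_k_nz by (auto simp: basic_def roweq)
    moreover have "\<forall>i<n. smod (v i) = smod (vk i)" using b by (auto simp: basic_def vkV)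
    moreover have "\<forall>i<n. signed (vk i) \<longrightarrow> v i = vk i" using b by (auto simp: basic_def vkV)
    ultimately show ?thesis by blast
  qed
  have P3: "\<forall>v. eigvec n A g v \<longrightarrow> (\<exists>c. signed c \<and> c \<noteq> 0 \<and> (\<forall>i<n. nabla (v i) (c * vk i)))"
  proof (intro allI impI)
    fix v assume ev: "eigvec n A g v"
    have vs: "\<forall>i<n. signed (v i)" and nz: "\<exists>i<n. v i \<noteq> 0" and rows: "\<forall>i<n. balanced (row i v)"
      using ev by (auto simp: eigvec_def roweq)
    have vk0: "v k \<noteq> 0" using vk_nonzero[OF vs nz] rows by auto
    define c where "c = v k * sinv (V k)"
    have cs: "signed c" using vs kn V_k_signed by (auto simp: c_def intro: signed_mult sinv_signed)
    have c0: "c \<noteq> 0" using vk0 V_k_nz sinv_ne0 by (auto simp: c_def)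
    define y where "y = (\<lambda>i. c * V i)"
    have exy: "exact y"
      unfolding exact_def y_def
    proof (intro allI impI)
      fix i assume i: "i < n" "i \<noteq> k"
      have "(\<Sum>s\<in>{0..<n} - {i}. B i s * (c * V s)) = c * (\<Sum>s\<in>{0..<n} - {i}. B i s * V s)"
        by (simp add: sum_distrib_left ac_simps)
      also have "\<dots> = c * \<ominus> (B i i * V i)" using E[OF i] by simp
      finally show "(\<Sum>s\<in>{0..<n} - {i}. B i s * (c * V s)) = \<ominus> (B i i * (c * V i))"
        by (simp add: mult_sminus ac_simps)
    qed
    have yk: "v k = y k"
    proof -
      have "y k = v k * (V k * sinv (V k))" by (simp add: y_def c_def ac_simps)
      then show ?thesis using sinv_right[OF V_k_signed V_k_nz] by simp
    qed
    have "\<forall>i<n. nabla (v i) (y i)" by (rule part3[OF exy vs]) (use rows yk in auto)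
    then have "\<forall>i<n. nabla (v i) (c * vk i)" by (simp add: y_def vkV)
    then show "\<exists>c. signed c \<and> c \<noteq> 0 \<and> (\<forall>i<n. nabla (v i) (c * vk i))" using cs c0 by blast
  qed
  show ?thesis using P1 P2 P3 by (simp add: g_def)
qed

end
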